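(* Let $Z\in\mathbb{R}^{n\times m}$, and let $\theta=(\theta_1,\dots,\theta_q)^T$ with $\theta_1=\sigma^2>0$, where $\Sigma=\Sigma(\theta_2,\dots,\theta_q)\in\mathbb{R}^{m\times m}$ is a covariance matrix depending differentiably on $\theta_2,\dots,\theta_q$. Put $C=Z\Sigma Z^T+\sigma^2I_n$. For each $i$ let $N(i)\subseteq\{1,\dots,i-1\}$, $A_i=(Z\Sigma Z^T)_{i,N(i)}(C_{N(i)})^{-1}$, $D_i=C_{i,i}-A_i(Z\Sigma Z^T)_{N(i),i}$; let $B$ be the unit lower triangular $n\times n$ matrix with $(B)_{i,N(i)}=-A_i$ and zeros elsewhere off the diagonal, and $D=\mathrm{diag}(D_1,\dots,D_n)$. Consider the model $y\sim\mathcal{N}(F,\tilde\Psi)$ with $\tilde\Psi=B^{-1}DB^{-T}$ and fixed mean $F\in\mathbb{R}^n$. Then its Fisher information matrix $I\in\mathbb{R}^{q\times q}$ with respect to $\theta$, $(I)_{kl}=\frac12\mathrm{tr}\left(\tilde\Psi^{-1}\frac{\partial\tilde\Psi}{\partial\theta_k}\tilde\Psi^{-1}\frac{\partial\tilde\Psi}{\partial\theta_l}\right)$, has entries $$(I)_{kl}=\sum_{i,j=1}^n\left(D^{-1}\frac{\partial B}{\partial\theta_k}B^{-1}\right)_{ij}\left(\frac{\partial B}{\partial\theta_l}B^{-1}D\right)_{ij}+\frac12\sum_{i=1}^nD_i^{-2}\frac{\partial D_i}{\partial\theta_k}\frac{\partial D_i}{\partial\theta_l},\qquad 1\le k,l\le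 q,$$ where $\frac{\partial B}{\partial\theta_k}$ (lower triangular with zero diagonal, non-zero entries $(\frac{\partial B}{\partial\theta_k})_{i,N(i)}=-\frac{\partial A_i}{\partial\theta_k}$) and $\frac{\partial D}{\partial\theta_k}=\mathrm{diag}(\frac{\partial D_i}{\partial\theta_k})$ are the entrywise derivatives of $B$ and $D$.
   Context: For a matrix $M$, $M_{i,N(i)}$ is the submatrix with row $i$ and columns $N(i)$, $M_{N(i),i}$ the submatrix with rows $N(i)$ and column $i$, and $M_{N(i)}$ the submatrix with rows and columns $N(i)$. The model $\mathcal{N}(F,B^{-1}DB^{-T})$ is the Vecchia approximation of $y=F+Zb+\epsilon$, $b\sim\mathcal{N}(0,\Sigma)$, $\epsilon\sim\mathcal{N}(0,\sigma^2I_n)$, obtained by replacing each conditional density $p(y_i\mid y_1,\dots,y_{i-1})$ by $p(y_i\mid y_{N(i)})$. *)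

theory Defs
  imports Complex_Main "Jordan_Normal_Form.Gauss_Jordan_Elimination" "Jordan_Normal_Form.DL_Submatrix"
begin

text \<open>Conventions: matrices are Jordan_Normal_Form matrices, indexed from 0.
  The parameter vector theta is a function nat => real; its coordinates
  0, ..., q-1 correspond to the paper's theta_1, ..., theta_q (theta 0 = sigma^2).\<close>

definition trace_mat :: "real mat \<Rightarrow> real" where
  "trace_mat A = (\<Sum>i<dim_row A. A $$ (i,i))"

definition inv_mat :: "real mat \<Rightarrow> real mat" where
  "inv_mat A = the (mat_inverse A)"

definition covariance_mat :: "nat \<Rightarrow> real mat \<Rightarrow> bool" where
  "covariance_mat m S \<longleftrightarrow> S \<in> carrier_mat m m \<and> transpose_mat S = S \<and>
     (\<forall>x \<in> carrier_vec m. 0 \<le> x \<bullet> (S *\<^sub>v x))"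

definition partial_deriv :: "((nat \<Rightarrow> real) \<Rightarrow> real) \<Rightarrow> nat \<Rightarrow> (nat \<Rightarrow> real) \<Rightarrow> real" where
  "partial_deriv f k \<theta> = (SOME D. ((\<lambda>t. f (\<theta>(k := t))) has_real_derivative D) (at (\<theta> k)))"

definition has_partial_deriv_at :: "((nat \<Rightarrow> real) \<Rightarrow> real) \<Rightarrow> nat \<Rightarrow> (nat \<Rightarrow> real) \<Rightarrow> bool" where
  "has_partial_deriv_at f k \<theta> \<longleftrightarrow> (\<lambda>t. f (\<theta>(k := t))) differentiable (at (\<theta> k))"

definition mat_partial_deriv :: "((nat \<Rightarrow> real) \<Rightarrow> real mat) \<Rightarrow> nat \<Rightarrow> (nat \<Rightarrow> real) \<Rightarrow> real mat" where
  "mat_partial_deriv M k \<theta> =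
     mat (dim_row (M \<theta>)) (dim_col (M \<theta>)) (\<lambda>(i,j). partial_deriv (\<lambda>\<theta>'. M \<theta>' $$ (i,j)) k \<theta>)"

definition ZSZ :: "real mat \<Rightarrow> ((nat \<Rightarrow> real) \<Rightarrow> real mat) \<Rightarrow> (nat \<Rightarrow> real) \<Rightarrow> real mat" where
  "ZSZ Z Sig \<theta> = Z * Sig \<theta> * transpose_mat Z"

definition Cmat :: "real mat \<Rightarrow> ((nat \<Rightarrow> real) \<Rightarrow> real mat) \<Rightarrow> (nat \<Rightarrow> real) \<Rightarrow> real mat" where
  "Cmat Z Sig \<theta> = ZSZ Z Sig \<theta> + \<theta> 0 \<cdot>\<^sub>m 1\<^sub>m (dim_row Z)"

definition Avec :: "real mat \<Rightarrow> ((nat \<Rightarrow> real) \<Rightarrow> real mat) \<Rightarrow> (nat \<Rightarrow> nat set) \<Rightarrow> nat \<Rightarrow> (nat \<Rightarrow> real) \<Rightarrow> real mat" where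
  "Avec Z Sig N i \<theta> = submatrix (ZSZ Z Sig \<theta>) {i} (N i) * inv_mat (submatrix (Cmat Z Sig \<theta>) (N i) (N i))"

definition Dval :: "real mat \<Rightarrow> ((nat \<Rightarrow> real) \<Rightarrow> real mat) \<Rightarrow> (nat \<Rightarrow> nat set) \<Rightarrow> nat \<Rightarrow> (nat \<Rightarrow> real) \<Rightarrow> real" where
  "Dval Z Sig N i \<theta> = Cmat Z Sig \<theta> $$ (i,i) - (Avec Z Sig N i \<theta> * submatrix (ZSZ Z Sig \<theta>) (N i) {i}) $$ (0,0)"

text \<open>B: unit lower triangular, B_{i,N(i)} = -A_i, zero elsewhere off the diagonal.
  The column j in N(i) is the (card {a in N(i). a < j})-th column of the submatrix.\<close>
definition Bmat :: "real mat \<Rightarrow> ((nat \<Rightarrow> real) \<Rightarrow> real mat) \<Rightarrow> (nat \<Rightarrow> nat set) \<Rightarrow> (nat \<Rightarrow> real) \<Rightarrow> real mat" where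
  "Bmat Z Sig N \<theta> = mat (dim_row Z) (dim_row Z) (\<lambda>(i,j).
      if i = j then 1
      else if j \<in> N i then - (Avec Z Sig N i \<theta> $$ (0, card {a \<in> N i. a < j}))
      else 0)"

definition Dmat :: "real mat \<Rightarrow> ((nat \<Rightarrow> real) \<Rightarrow> real mat) \<Rightarrow> (nat \<Rightarrow> nat set) \<Rightarrow> (nat \<Rightarrow> real) \<Rightarrow> real mat" where
  "Dmat Z Sig N \<theta> = mat_diag (dim_row Z) (\<lambda>i. Dval Z Sig N i \<theta>)"

definition Psi :: "real mat \<Rightarrow> ((nat \<Rightarrow> real) \<Rightarrow> real mat) \<Rightarrow> (nat \<Rightarrow> nat set) \<Rightarrow> (nat \<Rightarrow> real) \<Rightarrow> real mat" where
  "Psi Z Sig N \<theta> = inv_mat (Bmat Z Sig N \<theta>) * Dmat Z Sig N \<theta> * transpose_mat (inv_mat (Bmat Z Sig N \<theta>))"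

text \<open>Fisher information of N(F, Psi~(theta)) with fixed mean F.\<close>
definition fisher_info :: "real mat \<Rightarrow> ((nat \<Rightarrow> real) \<Rightarrow> real mat) \<Rightarrow> (nat \<Rightarrow> nat set) \<Rightarrow> (nat \<Rightarrow> real) \<Rightarrow> nat \<Rightarrow> nat \<Rightarrow> real" where
  "fisher_info Z Sig N \<theta> k l = 1/2 * trace_mat
     (inv_mat (Psi Z Sig N \<theta>) * mat_partial_deriv (Psi Z Sig N) k \<theta> *
      inv_mat (Psi Z Sig N \<theta>) * mat_partial_deriv (Psi Z Sig N) l \<theta>)"

end

theory Submission
  imports Defs "Jordan_Normal_Form.Determinant"
begin


lemma some_deriv_eq:
  assumes "(f has_real_derivative D) (at x)"
  shows "(SOME D. (f has_real_derivative D) (at x)) = D"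
  by (rule some_equality, rule assms, rule DERIV_unique[OF _ assms])

lemma differentiable_imp_some_deriv:
  assumes "f differentiable (at x)"
  shows "(f has_real_derivative (SOME D. (f has_real_derivative D) (at x))) (at x)"
  using assms unfolding real_differentiable_def by (rule someI_ex)

lemma differentiable_cong_ev:
  fixes f g :: "real \<Rightarrow> real"
  assumes "\<forall>\<^sub>F t in nhds x. f t = g t" "g differentiable (at x)"
  shows "f differentiable (at x)"
proof -
  obtain D where D: "(g has_real_derivative D) (at x)" using assms(2) unfolding real_differentiable_def by blast
  have "(f has_real_derivative D) (at x)"
    using DERIV_cong_ev[OF refl assms(1) refl] D by simp
  thus ?thesis unfolding real_differentiable_def by blast
qed

lemma differentiable_prod:
  fixes f :: "'i \<Rightarrow> real \<Rightarrow> real"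
  assumes "finite S" "\<And>a. a \<in> S \<Longrightarrow> f a differentiable (at x)"
  shows "(\<lambda>t. \<Prod>a\<in>S. f a t) differentiable (at x)"
  using assms
proof (induction S rule: finite_induct)
  case empty then show ?case by simp
next
  case (insert a S)
  then show ?case by (simp add: differentiable_mult)
qed

lemma mult_mat_index_sum:
  assumes "A \<in> carrier_mat nr p" "B \<in> carrier_mat p nc" "i < nr" "j < nc"
  shows "(A * B) $$ (i,j) = (\<Sum>a<p. A $$ (i,a) * B $$ (a,j))"
  using assms by (auto simp: scalar_prod_def atLeast0LessThan intro!: sum.cong)

definition mdiff :: "(real \<Rightarrow> real mat) \<Rightarrow> real \<Rightarrow> nat \<Rightarrow> nat \<Rightarrow> bool" where
  "mdiff f x nr nc \<longleftrightarrow> (\<forall>\<^sub>F t in nhds x. f t \<in> carrier_mat nr nc) \<and>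
     (\<forall>i<nr. \<forall>j<nc. (\<lambda>t. f t $$ (i,j)) differentiable (at x))"

definition mder :: "(real \<Rightarrow> real mat) \<Rightarrow> real mat \<Rightarrow> real \<Rightarrow> nat \<Rightarrow> nat \<Rightarrow> bool" where
  "mder f F x nr nc \<longleftrightarrow> F \<in> carrier_mat nr nc \<and> (\<forall>\<^sub>F t in nhds x. f t \<in> carrier_mat nr nc) \<and>
     (\<forall>i<nr. \<forall>j<nc. ((\<lambda>t. f t $$ (i,j)) has_real_derivative F $$ (i,j)) (at x))"

lemma mdiff_carrier: "mdiff f x nr nc \<Longrightarrow> f x \<in> carrier_mat nr nc"
  unfolding mdiff_def using eventually_nhds_x_imp_x by blast

lemma mder_carrier: "mder f F x nr nc \<Longrightarrow> f x \<in> carrier_mat nr nc"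
  unfolding mder_def using eventually_nhds_x_imp_x by blast

lemma mdiff_const: "A \<in> carrier_mat nr nc \<Longrightarrow> mdiff (\<lambda>t. A) x nr nc"
  unfolding mdiff_def by simp

lemma mdiff_add:
  assumes "mdiff f x nr nc" "mdiff g x nr nc"
  shows "mdiff (\<lambda>t. f t + g t) x nr nc"
  unfolding mdiff_def
proof (intro conjI allI impI)
  show ev: "\<forall>\<^sub>F t in nhds x. f t + g t \<in> carrier_mat nr nc"
    using assms unfolding mdiff_def by (auto elim: eventually_mono)
  fix i j assume ij: "i < nr" "j < nc"
  have "\<forall>\<^sub>F t in nhds x. (f t + g t) $$ (i,j) = f t $$ (i,j) + g t $$ (i,j)"
    using assms ij unfolding mdiff_def by (auto elim: eventually_mono)
  then show "(\<lambda>t. (f t + g t) $$ (i,j)) differentiable (at x)"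
    by (rule differentiable_cong_ev) (use assms ij in \<open>auto simp: mdiff_def\<close>)
qed

lemma mdiff_mult:
  assumes "mdiff f x nr p" "mdiff g x p nc"
  shows "mdiff (\<lambda>t. f t * g t) x nr nc"
  unfolding mdiff_def
proof (intro conjI allI impI)
  have ev: "\<forall>\<^sub>F t in nhds x. f t \<in> carrier_mat nr p \<and> g t \<in> carrier_mat p nc"
    using assms unfolding mdiff_def by (auto intro: eventually_conj)
  show "\<forall>\<^sub>F t in nhds x. f t * g t \<in> carrier_mat nr nc"
    using ev by (auto elim: eventually_mono)
  fix i j assume ij: "i < nr" "j < nc"
  have "\<forall>\<^sub>F t in nhds x. (f t * g t) $$ (i,j) = (\<Sum>a<p. f t $$ (i,a) * g t $$ (a,j))"
    using ev by (rule eventually_mono) (use ij in \<open>auto intro: mult_mat_index_sum\<close>)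
  then show "(\<lambda>t. (f t * g t) $$ (i,j)) differentiable (at x)"
    by (rule differentiable_cong_ev) (use assms ij in \<open>auto simp: mdiff_def\<close>)
qed

lemma mdiff_entry: "mdiff f x nr nc \<Longrightarrow> i < nr \<Longrightarrow> j < nc \<Longrightarrow> (\<lambda>t. f t $$ (i,j)) differentiable (at x)"
  unfolding mdiff_def by blast

lemma mdiff_mat:
  assumes "\<And>i j. i < nr \<Longrightarrow> j < nc \<Longrightarrow> (\<lambda>t. h t i j) differentiable (at x)"
  shows "mdiff (\<lambda>t. mat nr nc (\<lambda>(i,j). h t i j)) x nr nc"
  unfolding mdiff_def using assms by simp

lemma mdiff_transpose:
  assumes "mdiff f x nr nc"
  shows "mdiff (\<lambda>t. transpose_mat (f t)) x nc nr"
  unfolding mdiff_def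
proof (intro conjI allI impI)
  show "\<forall>\<^sub>F t in nhds x. transpose_mat (f t) \<in> carrier_mat nc nr"
    using assms unfolding mdiff_def by (auto elim: eventually_mono)
  fix i j assume ij: "i < nc" "j < nr"
  have "\<forall>\<^sub>F t in nhds x. transpose_mat (f t) $$ (i,j) = f t $$ (j,i)"
    using assms ij unfolding mdiff_def by (auto elim: eventually_mono)
  then show "(\<lambda>t. transpose_mat (f t) $$ (i,j)) differentiable (at x)"
    by (rule differentiable_cong_ev) (use assms ij in \<open>auto simp: mdiff_def\<close>)
qed

lemma mdiff_ev: "mdiff f x nr nc \<Longrightarrow> \<forall>\<^sub>F t in nhds x. f t \<in> carrier_mat nr nc"
  unfolding mdiff_def by blast

lemma mdiff_smult:
  assumes "c differentiable (at x)" "mdiff f x nr nc"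
  shows "mdiff (\<lambda>t. c t \<cdot>\<^sub>m f t) x nr nc"
  unfolding mdiff_def
proof (intro conjI allI impI)
  show "\<forall>\<^sub>F t in nhds x. c t \<cdot>\<^sub>m f t \<in> carrier_mat nr nc"
    using mdiff_ev[OF assms(2)] by (rule eventually_mono) simp
  fix i j assume ij: "i < nr" "j < nc"
  have "\<forall>\<^sub>F t in nhds x. (c t \<cdot>\<^sub>m f t) $$ (i,j) = c t * f t $$ (i,j)"
    using mdiff_ev[OF assms(2)] by (rule eventually_mono) (use ij in simp)
  moreover have "(\<lambda>t. c t * f t $$ (i,j)) differentiable (at x)"
    by (rule differentiable_mult[OF assms(1) mdiff_entry[OF assms(2) ij]])
  ultimately show "(\<lambda>t. (c t \<cdot>\<^sub>m f t) $$ (i,j)) differentiable (at x)"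
    by (rule differentiable_cong_ev)
qed

lemma mdiff_submatrix:
  assumes "mdiff f x nr nc"
  shows "mdiff (\<lambda>t. submatrix (f t) I J) x (card {i. i<nr \<and> i\<in>I}) (card {j. j<nc \<and> j\<in>J})"
  unfolding mdiff_def
proof (intro conjI allI impI)
  show "\<forall>\<^sub>F t in nhds x. submatrix (f t) I J \<in> carrier_mat (card {i. i<nr \<and> i\<in>I}) (card {j. j<nc \<and> j\<in>J})"
    using mdiff_ev[OF assms]
  proof (rule eventually_mono)
    fix t assume "f t \<in> carrier_mat nr nc"
    then show "submatrix (f t) I J \<in> carrier_mat (card {i. i<nr \<and> i\<in>I}) (card {j. j<nc \<and> j\<in>J})"
      unfolding carrier_mat_def by (simp add: dim_submatrix)
  qed
  fix i j assume ij: "i < card {i. i<nr \<and> i\<in>I}" "j < card {j. j<nc \<and> j\<in>J}"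
  have "\<forall>\<^sub>F t in nhds x. submatrix (f t) I J $$ (i,j) = f t $$ (pick I i, pick J j)"
    using mdiff_ev[OF assms]
  proof (rule eventually_mono)
    fix t assume "f t \<in> carrier_mat nr nc"
    then show "submatrix (f t) I J $$ (i,j) = f t $$ (pick I i, pick J j)"
      using ij by (intro submatrix_index) auto
  qed
  moreover have "pick I i < nr" "pick J j < nc" by (rule pick_le[OF ij(1)], rule pick_le[OF ij(2)])
  then have "(\<lambda>t. f t $$ (pick I i, pick J j)) differentiable (at x)"
    by (intro mdiff_entry[OF assms])
  ultimately show "(\<lambda>t. submatrix (f t) I J $$ (i,j)) differentiable (at x)"
    by (rule differentiable_cong_ev)
qed

lemma mdiff_mat_delete:
  assumes "mdiff f x n n"
  shows "mdiff (\<lambda>t. mat_delete (f t) a b) x (n-1) (n-1)"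
  unfolding mdiff_def
proof (intro conjI allI impI)
  show "\<forall>\<^sub>F t in nhds x. mat_delete (f t) a b \<in> carrier_mat (n-1) (n-1)"
    using mdiff_ev[OF assms] by (rule eventually_mono) (rule mat_delete_carrier)
  fix i j assume ij: "i < n-1" "j < n-1"
  have "\<forall>\<^sub>F t in nhds x. mat_delete (f t) a b $$ (i,j) = f t $$ (if i < a then i else Suc i, if j < b then j else Suc j)"
    using mdiff_ev[OF assms] by (rule eventually_mono) (use ij in \<open>simp add: mat_delete_def\<close>)
  moreover have "(\<lambda>t. f t $$ (if i < a then i else Suc i, if j < b then j else Suc j)) differentiable (at x)"
    by (rule mdiff_entry[OF assms]) (use ij in auto)
  ultimately show "(\<lambda>t. mat_delete (f t) a b $$ (i,j)) differentiable (at x)"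
    by (rule differentiable_cong_ev)
qed

lemma det_differentiable:
  assumes "mdiff f x n n"
  shows "(\<lambda>t. det (f t)) differentiable (at x)"
proof -
  have "\<forall>\<^sub>F t in nhds x. det (f t) = (\<Sum> p \<in> {p. p permutes {0 ..< n}}. signof p * (\<Prod> i = 0 ..< n. f t $$ (i, p i)))"
    using mdiff_ev[OF assms] by (rule eventually_mono) (rule det_def')
  moreover have "(\<lambda>t. \<Sum> p \<in> {p. p permutes {0 ..< n}}. signof p * (\<Prod> i = 0 ..< n. f t $$ (i, p i))) differentiable (at x)"
  proof (rule differentiable_sum)
    show "finite {p. p permutes {0 ..< n}}" by (simp add: finite_permutations)
    show "\<forall>p\<in>{p. p permutes {0..<n}}. (\<lambda>t. signof p * (\<Prod> i = 0 ..< n. f t $$ (i, p i))) differentiable at x"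
    proof
      fix p assume "p \<in> {p. p permutes {0..<n}}"
      then have p: "p permutes {0..<n}" by simp
      have "(\<lambda>t. \<Prod> i = 0 ..< n. f t $$ (i, p i)) differentiable at x"
        apply (rule differentiable_prod, simp)
        apply (rule mdiff_entry[OF assms])
        using permutes_in_image[OF p] by auto
      then show "(\<lambda>t. signof p * (\<Prod> i = 0 ..< n. f t $$ (i, p i))) differentiable at x"
        by (simp add: differentiable_mult)
    qed
  qed
  ultimately show ?thesis by (rule differentiable_cong_ev)
qed

lemma inv_mat_eq:
  assumes A: "A \<in> carrier_mat n n" and G: "G \<in> carrier_mat n n"
    and AG: "A * G = 1\<^sub>m n" and GA: "G * A = 1\<^sub>m n"
  shows "inv_mat A = G"
proof (cases "mat_inverse A")
  case None
  from mat_inverse(1)[OF A None, of undefined] have "A \<notin> Units (ring_mat TYPE(real) n undefined)" .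
  moreover have "A \<in> Units (ring_mat TYPE(real) n undefined)"
    unfolding Units_def ring_mat_def using A G AG GA by auto
  ultimately show ?thesis by blast
next
  case (Some B)
  from mat_inverse(2)[OF A Some] have B: "A * B = 1\<^sub>m n" "B * A = 1\<^sub>m n" "B \<in> carrier_mat n n" by auto
  have "G = G * (A * B)" using B G by simp
  also have "\<dots> = (G * A) * B" using A B G by simp
  also have "\<dots> = B" using GA B by simp
  finally show ?thesis unfolding inv_mat_def Some by simp
qed

lemma smult_inv_one: "(d::real) \<noteq> 0 \<Longrightarrow> (1/d) \<cdot>\<^sub>m (d \<cdot>\<^sub>m 1\<^sub>m n) = 1\<^sub>m n"
  by (rule eq_matI) auto

lemma inv_mat_adj:
  assumes A: "A \<in> carrier_mat n n" and d: "det A \<noteq> 0"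
  shows "inv_mat A = (1 / det A) \<cdot>\<^sub>m adj_mat A"
proof (rule inv_mat_eq[OF A])
  note adj = adj_mat[OF A]
  show "(1 / det A) \<cdot>\<^sub>m adj_mat A \<in> carrier_mat n n" using adj by simp
  show "A * ((1 / det A) \<cdot>\<^sub>m adj_mat A) = 1\<^sub>m n"
    using adj d A by (simp add: mult_smult_distrib[of _ n n _ n] smult_inv_one)
  show "(1 / det A) \<cdot>\<^sub>m adj_mat A * A = 1\<^sub>m n"
    using adj d A by (simp add: mult_smult_assoc_mat[of _ n n _ n] smult_inv_one)
qed


lemma inv_mat_prop:
  assumes A: "A \<in> carrier_mat n n" and d: "det A \<noteq> 0"
  shows "inv_mat A \<in> carrier_mat n n" "A * inv_mat A = 1\<^sub>m n" "inv_mat A * A = 1\<^sub>m n"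
proof -
  note adj = adj_mat[OF A]
  have e: "inv_mat A = (1 / det A) \<cdot>\<^sub>m adj_mat A" by (rule inv_mat_adj[OF A d])
  show "inv_mat A \<in> carrier_mat n n" unfolding e using adj by simp
  show "A * inv_mat A = 1\<^sub>m n" unfolding e
    using adj d A by (simp add: mult_smult_distrib[of _ n n _ n] smult_inv_one)
  show "inv_mat A * A = 1\<^sub>m n" unfolding e
    using adj d A by (simp add: mult_smult_assoc_mat[of _ n n _ n] smult_inv_one)
qed

lemma mdiff_inv:
  assumes f: "mdiff f x n n" and ev: "\<forall>\<^sub>F t in nhds x. det (f t) \<noteq> 0"
  shows "mdiff (\<lambda>t. inv_mat (f t)) x n n"
  unfolding mdiff_def
proof (intro conjI allI impI)
  have ev2: "\<forall>\<^sub>F t in nhds x. f t \<in> carrier_mat n n \<and> det (f t) \<noteq> 0"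
    using mdiff_ev[OF f] ev by (rule eventually_conj)
  then show "\<forall>\<^sub>F t in nhds x. inv_mat (f t) \<in> carrier_mat n n"
  proof (rule eventually_mono)
    fix t assume "f t \<in> carrier_mat n n \<and> det (f t) \<noteq> 0"
    then show "inv_mat (f t) \<in> carrier_mat n n" using inv_mat_prop(1) by blast
  qed
  fix i j assume ij: "i < n" "j < n"
  have "\<forall>\<^sub>F t in nhds x. inv_mat (f t) $$ (i,j) = (1 / det (f t)) * ((-1)^(j+i) * det (mat_delete (f t) j i))"
    using ev2 
  proof (rule eventually_mono)
    fix t assume t: "f t \<in> carrier_mat n n \<and> det (f t) \<noteq> 0"
    then have "inv_mat (f t) = (1 / det (f t)) \<cdot>\<^sub>m adj_mat (f t)" by (intro inv_mat_adj) auto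
    moreover have "dim_row (f t) = n" "dim_col (f t) = n" using t by auto
    ultimately show "inv_mat (f t) $$ (i,j) = (1 / det (f t)) * ((-1)^(j+i) * det (mat_delete (f t) j i))"
      using t ij by (simp add: adj_mat_def cofactor_def)
  qed
  moreover 
  have d1: "(\<lambda>t. det (f t)) differentiable (at x)" by (rule det_differentiable[OF f])
  have d2: "(\<lambda>t. det (mat_delete (f t) j i)) differentiable (at x)" 
    by (rule det_differentiable[OF mdiff_mat_delete[OF f]])
  have dx: "det (f x) \<noteq> 0" by (rule eventually_nhds_x_imp_x[OF ev])
  have "(\<lambda>t. (1 / det (f t)) * ((-1)^(j+i) * det (mat_delete (f t) j i))) differentiable (at x)"
    by (intro differentiable_mult differentiable_divide differentiable_const d1 d2 dx)
  ultimately show "(\<lambda>t. inv_mat (f t) $$ (i,j)) differentiable (at x)"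
    by (rule differentiable_cong_ev)
qed

lemma mder_ev: "mder f F x nr nc \<Longrightarrow> \<forall>\<^sub>F t in nhds x. f t \<in> carrier_mat nr nc"
  unfolding mder_def by blast

lemma mder_entry: "mder f F x nr nc \<Longrightarrow> i < nr \<Longrightarrow> j < nc \<Longrightarrow>
   ((\<lambda>t. f t $$ (i,j)) has_real_derivative F $$ (i,j)) (at x)"
  unfolding mder_def by blast

lemma mder_carrierD: "mder f F x nr nc \<Longrightarrow> F \<in> carrier_mat nr nc"
  unfolding mder_def by blast

lemma mder_mdiff: "mder f F x nr nc \<Longrightarrow> mdiff f x nr nc"
  unfolding mder_def mdiff_def real_differentiable_def by blast

lemma mder_of_mdiff:
  assumes "mdiff f x nr nc"
  shows "mder f (mat nr nc (\<lambda>(i,j). SOME D. ((\<lambda>t. f t $$ (i,j)) has_real_derivative D) (at x))) x nr nc"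
  unfolding mder_def
proof (intro conjI allI impI)
  show "\<forall>\<^sub>F t in nhds x. f t \<in> carrier_mat nr nc" by (rule mdiff_ev[OF assms])
  fix i j assume ij: "i < nr" "j < nc"
  show "((\<lambda>t. f t $$ (i,j)) has_real_derivative 
     (mat nr nc (\<lambda>(i,j). SOME D. ((\<lambda>t. f t $$ (i,j)) has_real_derivative D) (at x))) $$ (i,j)) (at x)"
    using differentiable_imp_some_deriv[OF mdiff_entry[OF assms ij]] ij by simp
qed simp

lemma mder_unique:
  assumes "mder f F x nr nc" "mder f G x nr nc"
  shows "F = G"
proof (rule eq_matI)
  show "dim_row F = dim_row G" "dim_col F = dim_col G"
    using mder_carrierD[OF assms(1)] mder_carrierD[OF assms(2)] by auto
  fix i j assume "i < dim_row G" "j < dim_col G"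
  then have ij: "i < nr" "j < nc" using mder_carrierD[OF assms(2)] by auto
  show "F $$ (i,j) = G $$ (i,j)"
    by (rule DERIV_unique[OF mder_entry[OF assms(1) ij] mder_entry[OF assms(2) ij]])
qed

lemma mder_cong_ev:
  assumes "mder f F x nr nc" "\<forall>\<^sub>F t in nhds x. f t = g t"
  shows "mder g F x nr nc"
  unfolding mder_def
proof (intro conjI allI impI)
  show "F \<in> carrier_mat nr nc" by (rule mder_carrierD[OF assms(1)])
  show "\<forall>\<^sub>F t in nhds x. g t \<in> carrier_mat nr nc"
    using eventually_conj[OF mder_ev[OF assms(1)] assms(2)] by (rule eventually_mono) auto
  fix i j assume ij: "i < nr" "j < nc"
  have "\<forall>\<^sub>F t in nhds x. g t $$ (i,j) = f t $$ (i,j)"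
    using assms(2) by (rule eventually_mono) auto
  then have "((\<lambda>t. g t $$ (i,j)) has_real_derivative F $$ (i,j)) (at x) \<longleftrightarrow>
     ((\<lambda>t. f t $$ (i,j)) has_real_derivative F $$ (i,j)) (at x)"
    by (rule DERIV_cong_ev[OF refl _ refl])
  then show "((\<lambda>t. g t $$ (i,j)) has_real_derivative F $$ (i,j)) (at x)"
    using mder_entry[OF assms(1) ij] by blast
qed

lemma mder_const: "A \<in> carrier_mat nr nc \<Longrightarrow> mder (\<lambda>t. A) (0\<^sub>m nr nc) x nr nc"
  unfolding mder_def by simp

lemma mder_mult:
  assumes f: "mder f F x nr p" and g: "mder g G x p nc"
  shows "mder (\<lambda>t. f t * g t) (F * g x + f x * G) x nr nc"
  unfolding mder_def
proof (intro conjI allI impI)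
  have fx: "f x \<in> carrier_mat nr p" by (rule eventually_nhds_x_imp_x[OF mder_ev[OF f]])
  have gx: "g x \<in> carrier_mat p nc" by (rule eventually_nhds_x_imp_x[OF mder_ev[OF g]])
  have F: "F \<in> carrier_mat nr p" and G: "G \<in> carrier_mat p nc"
    using mder_carrierD[OF f] mder_carrierD[OF g] .
  show "F * g x + f x * G \<in> carrier_mat nr nc" using fx gx F G by simp
  have ev: "\<forall>\<^sub>F t in nhds x. f t \<in> carrier_mat nr p \<and> g t \<in> carrier_mat p nc"
    by (rule eventually_conj[OF mder_ev[OF f] mder_ev[OF g]])
  show "\<forall>\<^sub>F t in nhds x. f t * g t \<in> carrier_mat nr nc"
    using ev by (rule eventually_mono) auto
  fix i j assume ij: "i < nr" "j < nc"
  have e: "\<forall>\<^sub>F t in nhds x. (f t * g t) $$ (i,j) = (\<Sum>a<p. f t $$ (i,a) * g t $$ (a,j))"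
    using ev 
  proof (rule eventually_mono)
    fix t assume "f t \<in> carrier_mat nr p \<and> g t \<in> carrier_mat p nc"
    then show "(f t * g t) $$ (i,j) = (\<Sum>a<p. f t $$ (i,a) * g t $$ (a,j))"
      using mult_mat_index_sum ij by blast
  qed
  have "((\<lambda>t. \<Sum>a<p. f t $$ (i,a) * g t $$ (a,j)) has_real_derivative
        (\<Sum>a<p. F $$ (i,a) * g x $$ (a,j) + G $$ (a,j) * f x $$ (i,a))) (at x)"
    by (rule DERIV_sum, rule DERIV_mult) (use ij in \<open>auto intro: mder_entry[OF f] mder_entry[OF g]\<close>)
  moreover have "(\<Sum>a<p. F $$ (i,a) * g x $$ (a,j) + G $$ (a,j) * f x $$ (i,a)) = (F * g x + f x * G) $$ (i,j)"
  proof -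
    have "(F * g x + f x * G) $$ (i,j) = (F * g x) $$ (i,j) + (f x * G) $$ (i,j)"
      using ij fx gx F G by simp
    also have "\<dots> = (\<Sum>a<p. F $$ (i,a) * g x $$ (a,j)) + (\<Sum>a<p. f x $$ (i,a) * G $$ (a,j))"
      using mult_mat_index_sum[OF F gx ij] mult_mat_index_sum[OF fx G ij] by simp
    finally show ?thesis by (simp add: sum.distrib mult.commute)
  qed
  ultimately show "((\<lambda>t. (f t * g t) $$ (i,j)) has_real_derivative (F * g x + f x * G) $$ (i,j)) (at x)"
    using DERIV_cong_ev[OF refl e refl] by simp
qed

lemma mder_transpose:
  assumes f: "mder f F x nr nc"
  shows "mder (\<lambda>t. transpose_mat (f t)) (transpose_mat F) x nc nr"
  unfolding mder_def
proof (intro conjI allI impI)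
  show "transpose_mat F \<in> carrier_mat nc nr" using mder_carrierD[OF f] by simp
  show "\<forall>\<^sub>F t in nhds x. transpose_mat (f t) \<in> carrier_mat nc nr"
    using mder_ev[OF f] by (rule eventually_mono) simp
  fix i j assume ij: "i < nc" "j < nr"
  have e: "\<forall>\<^sub>F t in nhds x. transpose_mat (f t) $$ (i,j) = f t $$ (j,i)"
    using mder_ev[OF f] by (rule eventually_mono) (use ij in simp)
  have "transpose_mat F $$ (i,j) = F $$ (j,i)" using ij mder_carrierD[OF f] by simp
  then show "((\<lambda>t. transpose_mat (f t) $$ (i,j)) has_real_derivative transpose_mat F $$ (i,j)) (at x)"
    using DERIV_cong_ev[OF refl e refl] mder_entry[OF f ij(2) ij(1)] by simp
qed

lemma mder_inv:
  assumes f: "mder f F x n n" and ev: "\<forall>\<^sub>F t in nhds x. det (f t) \<noteq> 0"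
  shows "mder (\<lambda>t. inv_mat (f t)) (- (inv_mat (f x) * F * inv_mat (f x))) x n n"
proof -
  let ?G = "\<lambda>t. inv_mat (f t)"
  have gd: "mdiff ?G x n n" by (rule mdiff_inv[OF mder_mdiff[OF f] ev])
  obtain G' where G': "mder ?G G' x n n" using mder_of_mdiff[OF gd] by blast
  have fx: "f x \<in> carrier_mat n n" by (rule eventually_nhds_x_imp_x[OF mder_ev[OF f]])
  have dx: "det (f x) \<noteq> 0" by (rule eventually_nhds_x_imp_x[OF ev])
  note Gx = inv_mat_prop[OF fx dx]
  have F: "F \<in> carrier_mat n n" by (rule mder_carrierD[OF f])
  have G'c: "G' \<in> carrier_mat n n" by (rule mder_carrierD[OF G'])
  have m1: "mder (\<lambda>t. f t * ?G t) (F * ?G x + f x * G') x n n" by (rule mder_mult[OF f G'])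
  have "\<forall>\<^sub>F t in nhds x. f t * ?G t = 1\<^sub>m n"
    using eventually_conj[OF mder_ev[OF f] ev]
  proof (rule eventually_mono)
    fix t assume "f t \<in> carrier_mat n n \<and> det (f t) \<noteq> 0"
    then show "f t * ?G t = 1\<^sub>m n" using inv_mat_prop(2) by blast
  qed
  then have m2: "mder (\<lambda>t. 1\<^sub>m n) (F * ?G x + f x * G') x n n" by (rule mder_cong_ev[OF m1])
  have z: "F * ?G x + f x * G' = 0\<^sub>m n n"
    by (rule mder_unique[OF m2 mder_const]) simp
  have e: "f x * G' = - (F * ?G x)"
  proof (rule eq_matI)
    fix i j assume "i < dim_row (- (F * ?G x))" "j < dim_col (- (F * ?G x))"
    then have ij: "i < n" "j < n" using F Gx by auto
    have "(F * ?G x + f x * G') $$ (i,j) = 0" using z ij by simp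
    then show "(f x * G') $$ (i,j) = (- (F * ?G x)) $$ (i,j)" using ij F Gx fx G'c by simp
  qed (use F Gx fx G'c in auto)
  have "G' = (?G x * f x) * G'" by (simp only: Gx(3) left_mult_one_mat[OF G'c])
  also have "\<dots> = ?G x * (f x * G')" by (rule assoc_mult_mat[OF Gx(1) fx G'c])
  also have "\<dots> = - (?G x * F * ?G x)" unfolding e using Gx F by simp
  finally show ?thesis using G' by simp
qed


lemma assoc_dims: "dim_col A = dim_row B \<Longrightarrow> dim_col B = dim_row C \<Longrightarrow> (A::'a::semiring_0 mat) * B * C = A * (B * C)"
  by (rule assoc_mult_mat[of A "dim_row A" "dim_col A" B "dim_col B" C "dim_col C"]) auto

lemma add_mult_dims: "dim_row A = dim_row B \<Longrightarrow> dim_col A = dim_col B \<Longrightarrow> dim_col A = dim_row C \<Longrightarrow>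
  ((A::'a::semiring_0 mat) + B) * C = A * C + B * C"
  by (rule add_mult_distrib_mat[of A "dim_row A" "dim_col A"]) auto

lemma mult_add_dims: "dim_row B = dim_row C \<Longrightarrow> dim_col B = dim_col C \<Longrightarrow> dim_col A = dim_row B \<Longrightarrow>
  (A::'a::semiring_0 mat) * (B + C) = A * B + A * C"
  by (rule mult_add_distrib_mat[of A "dim_row A" "dim_col A"]) auto

lemma minus_mult_dims: "dim_row A = dim_row B \<Longrightarrow> dim_col A = dim_col B \<Longrightarrow> dim_col A = dim_row C \<Longrightarrow>
  ((A::'a::ring mat) - B) * C = A * C - B * C"
  by (rule eq_matI) (auto simp: scalar_prod_def algebra_simps sum_subtractf)

lemma mult_minus_dims: "dim_row B = dim_row C \<Longrightarrow> dim_col B = dim_col C \<Longrightarrow> dim_col A = dim_row B \<Longrightarrow>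
  (A::'a::ring mat) * (B - C) = A * B - A * C"
  by (rule eq_matI) (auto simp: scalar_prod_def algebra_simps sum_subtractf)

lemma transpose_mult_dims: "dim_col A = dim_row B \<Longrightarrow> transpose_mat ((A::'a::comm_semiring_0 mat) * B) = transpose_mat B * transpose_mat A"
  by (rule transpose_mult[of A "dim_row A" "dim_col A" B "dim_col B"]) auto

lemma transpose_minus_dims: "dim_row A = dim_row B \<Longrightarrow> dim_col A = dim_col B \<Longrightarrow>
  transpose_mat ((A::'a::group_add mat) - B) = transpose_mat A - transpose_mat B"
  by (rule eq_matI) auto

lemma sum_delta_left: "p < (n::nat) \<Longrightarrow> (\<Sum>j<n. (if j = p then 1 else 0) * (f j::real)) = f p"
  by (subst sum.remove[of "{..<n}" p]) auto

lemma sum_delta_right: "p < (n::nat) \<Longrightarrow> (\<Sum>j<n. (f j::real) * (if j = p then 1 else 0)) = f p"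
  by (subst sum.remove[of "{..<n}" p]) auto

definition selm :: "nat \<Rightarrow> nat set \<Rightarrow> real mat" where
  "selm n S = mat n (card {j. j<n \<and> j\<in>S}) (\<lambda>(j,b). if j = pick S b then 1 else 0)"

lemma selm_carrier: "selm n S \<in> carrier_mat n (card {j. j<n \<and> j\<in>S})"
  unfolding selm_def by simp

lemma selm_index: "j < n \<Longrightarrow> b < card {j. j<n \<and> j\<in>S} \<Longrightarrow> selm n S $$ (j,b) = (if j = pick S b then 1 else 0)"
  unfolding selm_def by simp

lemma selm_sub:
  assumes M: "M \<in> carrier_mat n n"
  shows "transpose_mat (selm n S) * M * selm n S = submatrix M S S"
proof (rule eq_matI)
  let ?c = "card {j. j<n \<and> j\<in>S}"
  have E: "selm n S \<in> carrier_mat n ?c" by (rule selm_carrier)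
  show "dim_row (transpose_mat (selm n S) * M * selm n S) = dim_row (submatrix M S S)"
       "dim_col (transpose_mat (selm n S) * M * selm n S) = dim_col (submatrix M S S)"
    using E M by (auto simp: dim_submatrix)
  fix a b assume "a < dim_row (submatrix M S S)" "b < dim_col (submatrix M S S)"
  then have ab: "a < ?c" "b < ?c" using M by (auto simp: dim_submatrix)
  have pa: "pick S a < n" "pick S b < n" using pick_le[OF ab(1)] pick_le[OF ab(2)] by auto
  have Et: "transpose_mat (selm n S) \<in> carrier_mat ?c n" using E by simp
  have EM: "transpose_mat (selm n S) * M \<in> carrier_mat ?c n" using Et M by simp
  have 1: "\<And>l. l < n \<Longrightarrow> (transpose_mat (selm n S) * M) $$ (a,l) = M $$ (pick S a, l)"
  proof -
    fix l assume l: "l < n"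
    have "(transpose_mat (selm n S) * M) $$ (a,l) = (\<Sum>j<n. transpose_mat (selm n S) $$ (a,j) * M $$ (j,l))"
      by (rule mult_mat_index_sum[OF Et M ab(1) l])
    also have "\<dots> = (\<Sum>j<n. (if j = pick S a then 1 else 0) * M $$ (j,l))"
      using E ab by (intro sum.cong) (auto simp: selm_index)
    also have "\<dots> = M $$ (pick S a, l)" by (rule sum_delta_left[OF pa(1)])
    finally show "(transpose_mat (selm n S) * M) $$ (a,l) = M $$ (pick S a, l)" .
  qed
  have "(transpose_mat (selm n S) * M * selm n S) $$ (a,b) = (\<Sum>l<n. (transpose_mat (selm n S) * M) $$ (a,l) * selm n S $$ (l,b))"
    by (rule mult_mat_index_sum[OF EM E ab(1) ab(2)])
  also have "\<dots> = (\<Sum>l<n. M $$ (pick S a, l) * (if l = pick S b then 1 else 0))"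
    using ab by (intro sum.cong) (auto simp: selm_index 1)
  also have "\<dots> = M $$ (pick S a, pick S b)" by (rule sum_delta_right[OF pa(2)])
  also have "\<dots> = submatrix M S S $$ (a,b)" using ab M by (simp add: submatrix_index)
  finally show "(transpose_mat (selm n S) * M * selm n S) $$ (a,b) = submatrix M S S $$ (a,b)" .
qed

lemma selm_orth:
  "transpose_mat (selm n S) * selm n S = 1\<^sub>m (card {j. j<n \<and> j\<in>S})"
proof -
  have "transpose_mat (selm n S) * 1\<^sub>m n * selm n S = submatrix (1\<^sub>m n) S S"
    by (rule selm_sub) simp
  moreover have "transpose_mat (selm n S) * 1\<^sub>m n = transpose_mat (selm n S)"
    using selm_carrier[of n S] by simp
  moreover have "submatrix (1\<^sub>m n) S S = 1\<^sub>m (card {j. j<n \<and> j\<in>S})"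
  proof (rule eq_matI)
    fix a b assume "a < dim_row (1\<^sub>m (card {j. j<n \<and> j\<in>S}))" "b < dim_col (1\<^sub>m (card {j. j<n \<and> j\<in>S}))"
    then have ab: "a < card {j. j<n \<and> j\<in>S}" "b < card {j. j<n \<and> j\<in>S}" by auto
    have pa: "pick S a < n" "pick S b < n" using pick_le[OF ab(1)] pick_le[OF ab(2)] by auto
    have "pick S a = pick S b \<longleftrightarrow> a = b"
    proof
      assume e: "pick S a = pick S b"
      have c: "a < card S \<or> infinite S" "b < card S \<or> infinite S"
      proof -
        have "finite S \<Longrightarrow> card {j. j<n \<and> j\<in>S} \<le> card S" by (rule card_mono) auto
        then show "a < card S \<or> infinite S" "b < card S \<or> infinite S" using ab by auto
      qed
      show "a = b"
      proof (rule ccontr)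
        assume "a \<noteq> b"
        then consider "a < b" | "b < a" by linarith
        then show False
        proof cases
          case 1 then show ?thesis using pick_mono[OF c(2) 1] e by simp
        next
          case 2 then show ?thesis using pick_mono[OF c(1) 2] e by simp
        qed
      qed
    qed simp
    then show "submatrix (1\<^sub>m n) S S $$ (a,b) = 1\<^sub>m (card {j. j<n \<and> j\<in>S}) $$ (a,b)"
      using ab pa by (simp add: submatrix_index)
  qed (auto simp: dim_submatrix)
  ultimately show ?thesis by simp
qed

lemma qf_sum:
  fixes W M :: "real mat"
  assumes W: "W \<in> carrier_mat n 1" and M: "M \<in> carrier_mat n n"
  shows "(transpose_mat W * M * W) $$ (0,0) = (\<Sum>j<n. \<Sum>l<n. W $$ (j,0) * M $$ (j,l) * W $$ (l,0))"
proof -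
  have Wt: "transpose_mat W \<in> carrier_mat 1 n" using W by simp
  have WM: "transpose_mat W * M \<in> carrier_mat 1 n" using Wt M by simp
  have "(transpose_mat W * M * W) $$ (0,0) = (\<Sum>l<n. (transpose_mat W * M) $$ (0,l) * W $$ (l,0))"
    by (rule mult_mat_index_sum[OF WM W]) auto
  also have "\<dots> = (\<Sum>l<n. (\<Sum>j<n. W $$ (j,0) * M $$ (j,l)) * W $$ (l,0))"
    by (intro sum.cong refl) (subst mult_mat_index_sum[OF Wt M], use W in auto)
  also have "\<dots> = (\<Sum>l<n. \<Sum>j<n. W $$ (j,0) * M $$ (j,l) * W $$ (l,0))"
    by (simp add: sum_distrib_right)
  also have "\<dots> = (\<Sum>j<n. \<Sum>l<n. W $$ (j,0) * M $$ (j,l) * W $$ (l,0))"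
    by (rule sum.swap)
  finally show ?thesis .
qed

lemma qf_id:
  fixes W :: "real mat"
  assumes W: "W \<in> carrier_mat n 1"
  shows "(transpose_mat W * W) $$ (0,0) = (\<Sum>j<n. (W $$ (j,0))^2)"
proof -
  have "(transpose_mat W * W) $$ (0,0) = (\<Sum>a<n. transpose_mat W $$ (0,a) * W $$ (a,0))"
    by (rule mult_mat_index_sum) (use W in auto)
  also have "\<dots> = (\<Sum>j<n. (W $$ (j,0))^2)" using W by (intro sum.cong) (auto simp: power2_eq_square)
  finally show ?thesis .
qed


lemma scalar_prod_sum: "v \<in> carrier_vec k \<Longrightarrow> w \<in> carrier_vec k \<Longrightarrow> v \<bullet> w = (\<Sum>i<k. v $ i * w $ i)"
  unfolding scalar_prod_def by (simp add: atLeast0LessThan)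

lemma mult_mat_vec_sum: "A \<in> carrier_mat nr nc \<Longrightarrow> v \<in> carrier_vec nc \<Longrightarrow> i < nr \<Longrightarrow>
   (A *\<^sub>v v) $ i = (\<Sum>b<nc. A $$ (i,b) * v $ b)"
  by (simp add: scalar_prod_sum[of _ nc])

lemma selm_sub_assoc:
  "dim_row M = n \<Longrightarrow> dim_col M = n \<Longrightarrow> dim_row X = card {j. j<n \<and> j\<in>S} \<Longrightarrow>
   transpose_mat (selm n S) * (M * (selm n S * X)) = submatrix M S S * X"
proof -
  assume a: "dim_row M = n" "dim_col M = n" "dim_row X = card {j. j<n \<and> j\<in>S}"
  have "transpose_mat (selm n S) * (M * (selm n S * X)) = (transpose_mat (selm n S) * M * selm n S) * X"
    using a selm_carrier[of n S] by (simp add: assoc_dims carrier_matD)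
  also have "\<dots> = submatrix M S S * X" using selm_sub[OF carrier_matI[OF a(1) a(2)]] by simp
  finally show ?thesis .
qed

lemma selm_orth_assoc:
  "dim_row X = card {j. j<n \<and> j\<in>S} \<Longrightarrow> transpose_mat (selm n S) * (selm n S * X) = X"
proof -
  assume a: "dim_row X = card {j. j<n \<and> j\<in>S}"
  have "transpose_mat (selm n S) * (selm n S * X) = (transpose_mat (selm n S) * selm n S) * X"
    using a selm_carrier[of n S] by (simp add: assoc_dims carrier_matD)
  also have "\<dots> = X" using a by (simp add: selm_orth)
  finally show ?thesis .
qed

lemma submatrix_carrier:
  assumes "A \<in> carrier_mat nr nc"
  shows "submatrix A I J \<in> carrier_mat (card {i. i<nr \<and> i\<in>I}) (card {j. j<nc \<and> j\<in>J})"
proof -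
  have d: "dim_row A = nr" "dim_col A = nc" using assms by auto
  show ?thesis unfolding submatrix_def d by simp
qed

locale vecchia =
  fixes n m q :: nat and Z :: "real mat" and Sig :: "(nat \<Rightarrow> real) \<Rightarrow> real mat"
    and N :: "nat \<Rightarrow> nat set"
  assumes Z: "Z \<in> carrier_mat n m"
    and Sig_dep: "\<And>\<theta>1 \<theta>2. (\<forall>j\<in>{1..<q}. \<theta>1 j = \<theta>2 j) \<Longrightarrow> Sig \<theta>1 = Sig \<theta>2"
    and Sig_cov: "\<And>\<theta>'. covariance_mat m (Sig \<theta>')"
    and Sig_diff: "\<And>\<theta>' j a b. j \<in> {1..<q} \<Longrightarrow> a < m \<Longrightarrow> b < m \<Longrightarrow>
                      has_partial_deriv_at (\<lambda>\<theta>''. Sig \<theta>'' $$ (a,b)) j \<theta>'"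
    and N: "\<And>i. i < n \<Longrightarrow> N i \<subseteq> {..<i}"
begin

lemma S_carrier: "Sig \<theta>' \<in> carrier_mat m m"
  using Sig_cov unfolding covariance_mat_def by blast

lemma dimZ: "dim_row Z = n" "dim_col Z = m" using Z by auto

lemma K_carrier: "ZSZ Z Sig \<theta>' \<in> carrier_mat n n"
  unfolding ZSZ_def using Z S_carrier by auto

lemma C_carrier: "Cmat Z Sig \<theta>' \<in> carrier_mat n n"
  unfolding Cmat_def using K_carrier dimZ by auto

lemma C_index: "j < n \<Longrightarrow> l < n \<Longrightarrow> Cmat Z Sig \<theta>' $$ (j,l) = ZSZ Z Sig \<theta>' $$ (j,l) + \<theta>' 0 * (if j = l then 1 else 0)"
  unfolding Cmat_def using K_carrier[of \<theta>'] dimZ by simp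

lemma quad_K:
  assumes W: "W \<in> carrier_mat n 1"
  shows "0 \<le> (transpose_mat W * ZSZ Z Sig \<theta>' * W) $$ (0,0)"
proof -
  let ?S = "Sig \<theta>'"
  let ?U = "transpose_mat Z * W"
  have S: "?S \<in> carrier_mat m m" by (rule S_carrier)
  have U: "?U \<in> carrier_mat m 1" using Z W by simp
  have "transpose_mat W * ZSZ Z Sig \<theta>' * W = transpose_mat ?U * ?S * ?U"
    unfolding ZSZ_def using Z S W by (simp add: transpose_mult_dims assoc_dims carrier_matD)
  then have e: "(transpose_mat W * ZSZ Z Sig \<theta>' * W) $$ (0,0) = (\<Sum>a<m. \<Sum>b<m. ?U $$ (a,0) * ?S $$ (a,b) * ?U $$ (b,0))"
    using qf_sum[OF U S] by simp
  let ?u = "col ?U 0"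
  have u: "?u \<in> carrier_vec m" unfolding carrier_vec_def using carrier_matD(1)[OF U] by simp
  have "0 \<le> ?u \<bullet> (?S *\<^sub>v ?u)" using Sig_cov[of \<theta>'] u unfolding covariance_mat_def by blast
  also have "?u \<bullet> (?S *\<^sub>v ?u) = (\<Sum>a<m. ?U $$ (a,0) * (\<Sum>b<m. ?S $$ (a,b) * ?U $$ (b,0)))"
  proof -
    have Su: "?S *\<^sub>v ?u \<in> carrier_vec m" using S u by simp
    have "?u \<bullet> (?S *\<^sub>v ?u) = (\<Sum>a<m. ?u $ a * (?S *\<^sub>v ?u) $ a)" by (rule scalar_prod_sum[OF u Su])
    also have "\<dots> = (\<Sum>a<m. ?U $$ (a,0) * (\<Sum>b<m. ?S $$ (a,b) * ?U $$ (b,0)))"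
    proof (rule sum.cong[OF refl])
      fix a assume a: "a \<in> {..<m}"
      have "(?S *\<^sub>v ?u) $ a = (\<Sum>b<m. ?S $$ (a,b) * ?u $ b)" using mult_mat_vec_sum[OF S u] a by simp
      also have "\<dots> = (\<Sum>b<m. ?S $$ (a,b) * ?U $$ (b,0))" using carrier_matD[OF U] by (intro sum.cong refl) auto
      finally show "?u $ a * (?S *\<^sub>v ?u) $ a = ?U $$ (a,0) * (\<Sum>b<m. ?S $$ (a,b) * ?U $$ (b,0))"
        using carrier_matD[OF U] a by simp
    qed
    finally show ?thesis .
  qed
  also have "\<dots> = (\<Sum>a<m. \<Sum>b<m. ?U $$ (a,0) * ?S $$ (a,b) * ?U $$ (b,0))"
    by (simp add: sum_distrib_left mult.assoc)
  finally show ?thesis using e by simp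
qed

lemma quad_C:
  assumes W: "W \<in> carrier_mat n 1"
  shows "\<theta>' 0 * (transpose_mat W * W) $$ (0,0) \<le> (transpose_mat W * Cmat Z Sig \<theta>' * W) $$ (0,0)"
proof -
  let ?K = "ZSZ Z Sig \<theta>'"
  have K: "?K \<in> carrier_mat n n" by (rule K_carrier)
  have "(transpose_mat W * Cmat Z Sig \<theta>' * W) $$ (0,0) = (\<Sum>j<n. \<Sum>l<n. W $$ (j,0) * Cmat Z Sig \<theta>' $$ (j,l) * W $$ (l,0))"
    by (rule qf_sum[OF W C_carrier])
  also have "\<dots> = (\<Sum>j<n. (\<Sum>l<n. W $$ (j,0) * ?K $$ (j,l) * W $$ (l,0)) + 
                     (\<Sum>l<n. W $$ (j,0) * (\<theta>' 0 * (if j = l then 1 else 0)) * W $$ (l,0)))"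
    unfolding sum.distrib[symmetric]
    by (intro sum.cong refl) (simp add: C_index distrib_left distrib_right)
  also have "\<dots> = (\<Sum>j<n. \<Sum>l<n. W $$ (j,0) * ?K $$ (j,l) * W $$ (l,0)) + \<theta>' 0 * (\<Sum>j<n. (W $$ (j,0))^2)"
  proof -
    have "\<And>j. j < n \<Longrightarrow> (\<Sum>l<n. W $$ (j,0) * (\<theta>' 0 * (if j = l then 1 else 0)) * W $$ (l,0)) = \<theta>' 0 * (W $$ (j,0))^2"
    proof -
      fix j assume j: "j < n"
      have "(\<Sum>l<n. W $$ (j,0) * (\<theta>' 0 * (if j = l then 1 else 0)) * W $$ (l,0)) =
            (\<Sum>l<n. (W $$ (j,0) * \<theta>' 0 * W $$ (l,0)) * (if l = j then 1 else 0))"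
        by (intro sum.cong) auto
      also have "\<dots> = W $$ (j,0) * \<theta>' 0 * W $$ (j,0)" by (rule sum_delta_right[OF j])
      finally show "(\<Sum>l<n. W $$ (j,0) * (\<theta>' 0 * (if j = l then 1 else 0)) * W $$ (l,0)) = \<theta>' 0 * (W $$ (j,0))^2"
        by (simp add: power2_eq_square)
    qed
    then show ?thesis by (simp add: sum.distrib sum_distrib_left)
  qed
  finally have "(transpose_mat W * Cmat Z Sig \<theta>' * W) $$ (0,0) =
     (transpose_mat W * ?K * W) $$ (0,0) + \<theta>' 0 * (transpose_mat W * W) $$ (0,0)"
    using qf_sum[OF W K] qf_id[OF W] by simp
  then show ?thesis using quad_K[OF W] by simp
qed

lemma C_sub_det:
  assumes pos: "\<theta>' 0 > 0"
  shows "det (submatrix (Cmat Z Sig \<theta>') S S) \<noteq> 0"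
proof
  let ?C = "Cmat Z Sig \<theta>'"
  let ?c = "card {j. j<n \<and> j\<in>S}"
  let ?E = "selm n S"
  let ?CS = "submatrix ?C S S"
  have C: "?C \<in> carrier_mat n n" by (rule C_carrier)
  have CS: "?CS \<in> carrier_mat ?c ?c" by (rule submatrix_carrier[OF C])
  have E: "?E \<in> carrier_mat n ?c" by (rule selm_carrier)
  assume "det ?CS = 0"
  then obtain v where v: "v \<in> carrier_vec ?c" "v \<noteq> 0\<^sub>v ?c" "?CS *\<^sub>v v = 0\<^sub>v ?c"
    using det_0_iff_vec_prod_zero[OF CS] by blast
  define V where "V = mat ?c 1 (\<lambda>(b,_). v $ b)"
  have V: "V \<in> carrier_mat ?c 1" unfolding V_def by simp
  have colV: "col V 0 = v" unfolding V_def using v(1) by (intro eq_vecI) auto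
  have CSV: "?CS * V = 0\<^sub>m ?c 1"
  proof (rule eq_matI)
    fix b j assume bj: "b < dim_row (0\<^sub>m ?c 1)" "j < dim_col (0\<^sub>m ?c 1)"
    then have "(?CS * V) $$ (b,j) = row ?CS b \<bullet> col V 0" using CS V by simp
    also have "\<dots> = (?CS *\<^sub>v v) $ b" using colV bj CS by simp
    also have "\<dots> = 0" using v(3) bj by simp
    finally show "(?CS * V) $$ (b,j) = 0\<^sub>m ?c 1 $$ (b,j)" using bj by simp
  qed (use CS V in auto)
  define W where "W = ?E * V"
  have W: "W \<in> carrier_mat n 1" unfolding W_def using E V by simp
  have "transpose_mat W * ?C * W = transpose_mat V * (?CS * V)"
    unfolding W_def using E V C by (simp add: transpose_mult_dims assoc_dims carrier_matD selm_sub_assoc)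
  then have q0: "(transpose_mat W * ?C * W) $$ (0,0) = 0" using CSV V by simp
  have "transpose_mat W * W = transpose_mat V * V"
    unfolding W_def using E V by (simp add: transpose_mult_dims assoc_dims carrier_matD selm_orth_assoc)
  then have q1: "(transpose_mat W * W) $$ (0,0) = (\<Sum>b<?c. (v $ b)^2)"
    using qf_id[OF V] V unfolding V_def by simp
  obtain b where b: "b < ?c" "v $ b \<noteq> 0"
  proof -
    have "\<exists>b<?c. v $ b \<noteq> 0"
    proof (rule ccontr)
      assume "\<not> ?thesis"
      then have "v = 0\<^sub>v ?c" using v(1) by (intro eq_vecI) auto
      then show False using v(2) by simp
    qed
    then show ?thesis using that by blast
  qed
  have "(v $ b)^2 \<le> (\<Sum>b<?c. (v $ b)^2)"
    by (rule member_le_sum) (use b in auto)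
  moreover have "0 < (v $ b)^2" using b by simp
  ultimately have "0 < (transpose_mat W * W) $$ (0,0)" unfolding q1 by linarith
  then have "0 < \<theta>' 0 * (transpose_mat W * W) $$ (0,0)" using pos by simp
  with quad_C[OF W, of \<theta>'] q0 show False by simp
qed

end



lemma selm_sub2:
  assumes M: "M \<in> carrier_mat n n"
  shows "transpose_mat (selm n I) * M * selm n J = submatrix M I J"
proof (rule eq_matI)
  let ?c = "card {j. j<n \<and> j\<in>I}"
  let ?d = "card {j. j<n \<and> j\<in>J}"
  have E: "selm n I \<in> carrier_mat n ?c" by (rule selm_carrier)
  have F: "selm n J \<in> carrier_mat n ?d" by (rule selm_carrier)
  show "dim_row (transpose_mat (selm n I) * M * selm n J) = dim_row (submatrix M I J)"
       "dim_col (transpose_mat (selm n I) * M * selm n J) = dim_col (submatrix M I J)"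
    using E F M by (auto simp: dim_submatrix)
  fix a b assume "a < dim_row (submatrix M I J)" "b < dim_col (submatrix M I J)"
  then have ab: "a < ?c" "b < ?d" using M by (auto simp: dim_submatrix)
  have pa: "pick I a < n" "pick J b < n" using pick_le[OF ab(1)] pick_le[OF ab(2)] by auto
  have Et: "transpose_mat (selm n I) \<in> carrier_mat ?c n" using E by simp
  have EM: "transpose_mat (selm n I) * M \<in> carrier_mat ?c n" using Et M by simp
  have 1: "\<And>l. l < n \<Longrightarrow> (transpose_mat (selm n I) * M) $$ (a,l) = M $$ (pick I a, l)"
  proof -
    fix l assume l: "l < n"
    have "(transpose_mat (selm n I) * M) $$ (a,l) = (\<Sum>j<n. transpose_mat (selm n I) $$ (a,j) * M $$ (j,l))"
      by (rule mult_mat_index_sum[OF Et M ab(1) l])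
    also have "\<dots> = (\<Sum>j<n. (if j = pick I a then 1 else 0) * M $$ (j,l))"
      using E ab by (intro sum.cong) (auto simp: selm_index)
    also have "\<dots> = M $$ (pick I a, l)" by (rule sum_delta_left[OF pa(1)])
    finally show "(transpose_mat (selm n I) * M) $$ (a,l) = M $$ (pick I a, l)" .
  qed
  have "(transpose_mat (selm n I) * M * selm n J) $$ (a,b) = (\<Sum>l<n. (transpose_mat (selm n I) * M) $$ (a,l) * selm n J $$ (l,b))"
    by (rule mult_mat_index_sum[OF EM F ab(1) ab(2)])
  also have "\<dots> = (\<Sum>l<n. M $$ (pick I a, l) * (if l = pick J b then 1 else 0))"
    using ab by (intro sum.cong) (auto simp: selm_index 1)
  also have "\<dots> = M $$ (pick I a, pick J b)" by (rule sum_delta_right[OF pa(2)])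
  also have "\<dots> = submatrix M I J $$ (a,b)" using ab M by (simp add: submatrix_index)
  finally show "(transpose_mat (selm n I) * M * selm n J) $$ (a,b) = submatrix M I J $$ (a,b)" .
qed

lemma selm_sub2_assoc:
  "dim_row M = n \<Longrightarrow> dim_col M = n \<Longrightarrow> dim_row X = card {j. j<n \<and> j\<in>J} \<Longrightarrow>
   transpose_mat (selm n I) * (M * (selm n J * X)) = submatrix M I J * X"
proof -
  assume a: "dim_row M = n" "dim_col M = n" "dim_row X = card {j. j<n \<and> j\<in>J}"
  have "transpose_mat (selm n I) * (M * (selm n J * X)) = (transpose_mat (selm n I) * M * selm n J) * X"
    using a selm_carrier[of n I] selm_carrier[of n J] by (simp add: assoc_dims carrier_matD)
  also have "\<dots> = submatrix M I J * X" using selm_sub2[OF carrier_matI[OF a(1) a(2)]] by simp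
  finally show ?thesis .
qed

lemma selm_sub2_assoc0:
  "dim_row M = n \<Longrightarrow> dim_col M = n \<Longrightarrow> 
   transpose_mat (selm n I) * (M * selm n J) = submatrix M I J"
proof -
  assume a: "dim_row M = n" "dim_col M = n"
  have "transpose_mat (selm n I) * (M * selm n J) = (transpose_mat (selm n I) * M * selm n J)"
    using a selm_carrier[of n I] selm_carrier[of n J] by (simp add: assoc_dims carrier_matD)
  also have "\<dots> = submatrix M I J" using selm_sub2[OF carrier_matI[OF a(1) a(2)]] by simp
  finally show ?thesis .
qed

lemma card_single: "i < n \<Longrightarrow> card {j. j < n \<and> j \<in> {i}} = 1"
proof -
  assume "i < n"
  then have "{j. j < n \<and> j \<in> {i}} = {i}" by auto
  then show ?thesis by simp
qed

lemma least_eq_self[simp]: "(LEAST a::nat. a = i) = i" by (rule Least_equality) auto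

lemma pick_single: "pick {i} 0 = i" by simp

context vecchia
begin

lemma dimCK[simp]: "dim_row (Cmat Z Sig \<theta>') = n" "dim_col (Cmat Z Sig \<theta>') = n"
  "dim_row (ZSZ Z Sig \<theta>') = n" "dim_col (ZSZ Z Sig \<theta>') = n"
  using C_carrier[of \<theta>'] K_carrier[of \<theta>'] by auto

lemma N_pick:
  assumes i: "i < n" and b: "b < card {j. j<n \<and> j\<in>N i}"
  shows "pick (N i) b < i"
proof -
  have "{j. j<n \<and> j\<in>N i} = {j. j<i \<and> j\<in>N i}" using N[OF i] i by auto
  then show ?thesis using pick_le[of b i "N i"] b by simp
qed

lemma subC_row: 
  assumes i: "i < n"
  shows "submatrix (Cmat Z Sig \<theta>') {i} (N i) = submatrix (ZSZ Z Sig \<theta>') {i} (N i)"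
proof (rule eq_matI)
  have C: "Cmat Z Sig \<theta>' \<in> carrier_mat n n" by (rule C_carrier)
  have K: "ZSZ Z Sig \<theta>' \<in> carrier_mat n n" by (rule K_carrier)
  fix a b assume ab: "a < dim_row (submatrix (ZSZ Z Sig \<theta>') {i} (N i))" "b < dim_col (submatrix (ZSZ Z Sig \<theta>') {i} (N i))"
  then have a: "a = 0" and b: "b < card {j. j<n \<and> j\<in>N i}" using K card_single[OF i] by (auto simp: dim_submatrix)
  have pb: "pick (N i) b < i" by (rule N_pick[OF i b])
  show "submatrix (Cmat Z Sig \<theta>') {i} (N i) $$ (a,b) = submatrix (ZSZ Z Sig \<theta>') {i} (N i) $$ (a,b)"
    using C K a b pb i card_single[OF i] by (simp add: submatrix_index C_index)
qed (simp_all add: dim_submatrix)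

lemma subC_col: 
  assumes i: "i < n"
  shows "submatrix (Cmat Z Sig \<theta>') (N i) {i} = submatrix (ZSZ Z Sig \<theta>') (N i) {i}"
proof (rule eq_matI)
  have C: "Cmat Z Sig \<theta>' \<in> carrier_mat n n" by (rule C_carrier)
  have K: "ZSZ Z Sig \<theta>' \<in> carrier_mat n n" by (rule K_carrier)
  fix a b assume ab: "a < dim_row (submatrix (ZSZ Z Sig \<theta>') (N i) {i})" "b < dim_col (submatrix (ZSZ Z Sig \<theta>') (N i) {i})"
  then have b: "b = 0" and a: "a < card {j. j<n \<and> j\<in>N i}" using K card_single[OF i] by (auto simp: dim_submatrix)
  have pb: "pick (N i) a < i" by (rule N_pick[OF i a])
  show "submatrix (Cmat Z Sig \<theta>') (N i) {i} $$ (a,b) = submatrix (ZSZ Z Sig \<theta>') (N i) {i} $$ (a,b)"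
    using C K a b pb i card_single[OF i] by (simp add: submatrix_index C_index)
qed (simp_all add: dim_submatrix)

end



lemma card_single': "i < n \<Longrightarrow> card {j. j = i \<and> j < n} = 1"
  using card_single[of i n] by (simp add: conj_commute)

context vecchia
begin

lemma Dval_pos:
  assumes i: "i < n" and pos: "\<theta>' 0 > 0"
  shows "Dval Z Sig N i \<theta>' > 0"
proof -
  let ?C = "Cmat Z Sig \<theta>'"
  let ?K = "ZSZ Z Sig \<theta>'"
  let ?c = "card {j. j<n \<and> j\<in>N i}"
  let ?E = "selm n (N i)"
  let ?Ei = "selm n {i}"
  let ?CS = "submatrix ?C (N i) (N i)"
  let ?Ci = "inv_mat ?CS"
  let ?r = "submatrix ?K {i} (N i)"
  let ?col = "submatrix ?K (N i) {i}"
  let ?A = "Avec Z Sig N i \<theta>'"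
  have C: "?C \<in> carrier_mat n n" by (rule C_carrier)
  have K: "?K \<in> carrier_mat n n" by (rule K_carrier)
  have c1: "card {j. j<n \<and> j\<in>{i}} = 1" "card {j. j = i \<and> j < n} = 1"
    using card_single[OF i] card_single'[OF i] .
  have E: "?E \<in> carrier_mat n ?c" by (rule selm_carrier)
  have Ei: "?Ei \<in> carrier_mat n 1" using selm_carrier[of n "{i}"] c1 by simp
  have CS: "?CS \<in> carrier_mat ?c ?c" by (rule submatrix_carrier[OF C])
  have dCS: "det ?CS \<noteq> 0" by (rule C_sub_det[of \<theta>', OF pos])
  note Ci = inv_mat_prop[OF CS dCS]
  have r: "?r \<in> carrier_mat 1 ?c" using submatrix_carrier[OF K, of "{i}" "N i"] c1 by simp
  have col: "?col \<in> carrier_mat ?c 1" using submatrix_carrier[OF K, of "N i" "{i}"] c1 by simp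
  have Adef: "?A = ?r * ?Ci" unfolding Avec_def ..
  have A: "?A \<in> carrier_mat 1 ?c" unfolding Adef using r Ci by simp
  have A_CS: "\<And>X. dim_row X = ?c \<Longrightarrow> ?A * (?CS * X) = ?r * X"
  proof -
    fix X :: "real mat" assume X: "dim_row X = ?c"
    have e1: "?A * (?CS * X) = ?r * (?Ci * (?CS * X))" unfolding Adef
      using r Ci CS X by (simp add: assoc_dims carrier_matD)
    have Xc: "X \<in> carrier_mat ?c (dim_col X)" using X by (intro carrier_matI) auto
    have "?Ci * (?CS * X) = (?Ci * ?CS) * X" by (rule assoc_mult_mat[symmetric, OF Ci(1) CS Xc])
    also have "\<dots> = 1\<^sub>m ?c * X" by (simp only: Ci(3))
    also have "\<dots> = X" by (rule left_mult_one_mat[OF Xc])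
    finally have "?Ci * (?CS * X) = X" .
    then show "?A * (?CS * X) = ?r * X" using e1 by simp
  qed
  define W where "W = ?Ei - ?E * transpose_mat ?A"
  have W: "W \<in> carrier_mat n 1" unfolding W_def
    by (rule minus_carrier_mat, rule mult_carrier_mat[OF E]) (use A in simp)
  have dims: "dim_row ?E = n" "dim_col ?E = ?c" "dim_row ?Ei = n" "dim_col ?Ei = 1"
     "dim_row ?A = 1" "dim_col ?A = ?c" "dim_row ?r = 1" "dim_col ?r = ?c"
     "dim_row ?col = ?c" "dim_col ?col = 1" "dim_row ?C = n" "dim_col ?C = n"
    using E Ei A r col C by auto
  have "(transpose_mat W * ?C * W) $$ (0,0) = ?C $$ (i,i) - (?A * ?col) $$ (0,0)"
    unfolding W_def using dims c1
    by (simp add: transpose_minus_dims transpose_mult_dims minus_mult_dims mult_minus_dims assoc_dims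
        selm_sub2_assoc selm_sub2_assoc0 subC_row[OF i] subC_col[OF i] A_CS submatrix_index)
  also have "\<dots> = Dval Z Sig N i \<theta>'" unfolding Dval_def ..
  finally have q: "(transpose_mat W * ?C * W) $$ (0,0) = Dval Z Sig N i \<theta>'" .
  have Wi: "W $$ (i,0) = 1"
  proof -
    have "(?E * transpose_mat ?A) $$ (i,0) = (\<Sum>b<?c. ?E $$ (i,b) * transpose_mat ?A $$ (b,0))"
      by (rule mult_mat_index_sum[OF E _ i]) (use A in auto)
    also have "\<dots> = 0"
    proof (rule sum.neutral, rule ballI)
      fix b assume b: "b \<in> {..<?c}"
      have "pick (N i) b < i" using N_pick[OF i] b by simp
      then show "?E $$ (i,b) * transpose_mat ?A $$ (b,0) = 0" using b i by (simp add: selm_index)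
    qed
    finally show ?thesis unfolding W_def using i Ei E A c1 by (simp add: selm_index)
  qed
  have "1 \<le> (transpose_mat W * W) $$ (0,0)"
  proof -
    have "(W $$ (i,0))^2 \<le> (\<Sum>j<n. (W $$ (j,0))^2)" by (rule member_le_sum) (use i in auto)
    then show ?thesis using qf_id[OF W] Wi by simp
  qed
  then have h: "\<theta>' 0 * 1 \<le> \<theta>' 0 * (transpose_mat W * W) $$ (0,0)" using pos
    by (intro mult_left_mono) auto
  have "\<theta>' 0 * (transpose_mat W * W) $$ (0,0) \<le> Dval Z Sig N i \<theta>'" using quad_C[OF W, of \<theta>'] q by simp
  with h pos show ?thesis by linarith
qed

end



context vecchia
begin

lemma Sig_path:
  assumes k: "k < q"
  shows "mdiff (\<lambda>t. Sig (\<theta>(k:=t))) x m m"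
proof (cases "k = 0")
  case True
  have "\<And>t. Sig (\<theta>(k:=t)) = Sig \<theta>" by (rule Sig_dep) (use True in auto)
  then have e: "(\<lambda>t. Sig (\<theta>(k:=t))) = (\<lambda>t. Sig \<theta>)" by (rule ext)
  show ?thesis unfolding e by (rule mdiff_const[OF S_carrier])
next
  case False
  then have k1: "k \<in> {1..<q}" using k by auto
  show ?thesis unfolding mdiff_def
  proof (intro conjI allI impI)
    show "\<forall>\<^sub>F t in nhds x. Sig (\<theta>(k := t)) \<in> carrier_mat m m" using S_carrier by simp
    fix a b assume ab: "a < m" "b < m"
    from Sig_diff[OF k1 ab, of "\<theta>(k:=x)"]
    show "(\<lambda>t. Sig (\<theta>(k := t)) $$ (a, b)) differentiable at x"
      unfolding has_partial_deriv_at_def by simp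
  qed
qed

lemma K_path:
  assumes k: "k < q"
  shows "mdiff (\<lambda>t. ZSZ Z Sig (\<theta>(k:=t))) x n n"
  unfolding ZSZ_def
  by (rule mdiff_mult[OF mdiff_mult[OF mdiff_const[OF Z] Sig_path[OF k]] mdiff_const]) (use Z in simp)

lemma theta0_diff: "(\<lambda>t. (\<theta>(k:=t)) 0) differentiable (at x)"
  by (cases "k = 0") auto

lemma C_path:
  assumes k: "k < q"
  shows "mdiff (\<lambda>t. Cmat Z Sig (\<theta>(k:=t))) x n n"
  unfolding Cmat_def dimZ
  by (rule mdiff_add[OF K_path[OF k] mdiff_smult[OF theta0_diff mdiff_const]]) simp

lemma pos_ev:
  fixes \<theta> :: "nat \<Rightarrow> real"
  assumes "(\<theta>(k:=x)) 0 > 0"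
  shows "\<forall>\<^sub>F t in nhds x. (\<theta>(k:=t)) 0 > 0"
proof (cases "k = 0")
  case True
  then have "x \<in> {0<..}" using assms by simp
  then have "\<forall>\<^sub>F t in nhds x. t \<in> {0<..}" by (intro eventually_nhds_in_open) (auto simp: open_greaterThan)
  then show ?thesis by (rule eventually_mono) (use True in simp)
next
  case False
  then show ?thesis using assms by simp
qed

lemma Avec_path:
  assumes i: "i < n" and k: "k < q" and pos: "(\<theta>(k:=x)) 0 > 0"
  shows "mdiff (\<lambda>t. Avec Z Sig N i (\<theta>(k:=t))) x 1 (card {j. j<n \<and> j\<in>N i})"
proof -
  have r: "mdiff (\<lambda>t. submatrix (ZSZ Z Sig (\<theta>(k:=t))) {i} (N i)) x 1 (card {j. j<n \<and> j\<in>N i})"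
    using mdiff_submatrix[OF K_path[where \<theta>=\<theta> and x=x, OF k], of "{i}" "N i"] card_single[OF i] by simp
  have ev: "\<forall>\<^sub>F t in nhds x. det (submatrix (Cmat Z Sig (\<theta>(k:=t))) (N i) (N i)) \<noteq> 0"
    using pos_ev[OF pos] by (rule eventually_mono) (rule C_sub_det)
  have ci: "mdiff (\<lambda>t. inv_mat (submatrix (Cmat Z Sig (\<theta>(k:=t))) (N i) (N i))) x (card {j. j<n \<and> j\<in>N i}) (card {j. j<n \<and> j\<in>N i})"
    by (rule mdiff_inv[OF mdiff_submatrix[OF C_path[OF k]] ev])
  show ?thesis unfolding Avec_def by (rule mdiff_mult[OF r ci])
qed

lemma col_path:
  assumes i: "i < n" and k: "k < q"
  shows "mdiff (\<lambda>t. submatrix (ZSZ Z Sig (\<theta>(k:=t))) (N i) {i}) x (card {j. j<n \<and> j\<in>N i}) 1"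
  using mdiff_submatrix[OF K_path[where \<theta>=\<theta> and x=x, OF k], of "N i" "{i}"] card_single[OF i] by simp

lemma Dval_path:
  assumes i: "i < n" and k: "k < q" and pos: "(\<theta>(k:=x)) 0 > 0"
  shows "(\<lambda>t. Dval Z Sig N i (\<theta>(k:=t))) differentiable (at x)"
  unfolding Dval_def
  by (rule differentiable_diff[OF mdiff_entry[OF C_path[OF k] i i]
        mdiff_entry[OF mdiff_mult[OF Avec_path[OF i k pos] col_path[OF i k]]]]) auto

lemma card_before:
  assumes i: "i < n" and j: "j < n" "j \<in> N i"
  shows "card {a \<in> N i. a < j} < card {j. j<n \<and> j\<in>N i}"
proof (rule psubset_card_mono)
  show "finite {j. j<n \<and> j\<in>N i}" by simp
  show "{a \<in> N i. a < j} \<subset> {j. j<n \<and> j\<in>N i}" using j by auto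
qed

lemma B_path:
  assumes k: "k < q" and pos: "(\<theta>(k:=x)) 0 > 0"
  shows "mdiff (\<lambda>t. Bmat Z Sig N (\<theta>(k:=t))) x n n"
  unfolding Bmat_def dimZ
proof (rule mdiff_mat)
  fix i j assume ij: "i < n" "j < n"
  show "(\<lambda>t. if i = j then 1 else if j \<in> N i then - (Avec Z Sig N i (\<theta>(k:=t)) $$ (0, card {a \<in> N i. a < j})) else 0)
        differentiable (at x)"
  proof (cases "i = j")
    case True then show ?thesis by simp
  next
    case False
    show ?thesis
    proof (cases "j \<in> N i")
      case True
      have "(\<lambda>t. Avec Z Sig N i (\<theta>(k:=t)) $$ (0, card {a \<in> N i. a < j})) differentiable (at x)"
        by (rule mdiff_entry[OF Avec_path[OF ij(1) k pos]]) (use card_before[OF ij(1) ij(2) True] in auto)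
      then show ?thesis using False True by simp
    next
      case F: False then show ?thesis using False by simp
    qed
  qed
qed

lemma D_path:
  assumes k: "k < q" and pos: "(\<theta>(k:=x)) 0 > 0"
  shows "mdiff (\<lambda>t. Dmat Z Sig N (\<theta>(k:=t))) x n n"
  unfolding Dmat_def dimZ mat_diag_def
proof (rule mdiff_mat)
  fix i j assume ij: "i < n" "j < n"
  show "(\<lambda>t. if i = j then Dval Z Sig N j (\<theta>(k:=t)) else 0) differentiable (at x)"
    using Dval_path[OF ij(2) k pos] by (cases "i = j") auto
qed

end



lemma mat_partial_deriv_eq:
  assumes d: "mder (\<lambda>t. M (\<theta>(k:=t))) F (\<theta> k) nr nc" and c: "M \<theta> \<in> carrier_mat nr nc"
  shows "mat_partial_deriv M k \<theta> = F"
proof (rule eq_matI)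
  have F: "F \<in> carrier_mat nr nc" by (rule mder_carrierD[OF d])
  show "dim_row (mat_partial_deriv M k \<theta>) = dim_row F" "dim_col (mat_partial_deriv M k \<theta>) = dim_col F"
    using c F by (auto simp: mat_partial_deriv_def)
  fix i j assume "i < dim_row F" "j < dim_col F"
  then have ij: "i < nr" "j < nc" using F by auto
  have "mat_partial_deriv M k \<theta> $$ (i,j) = partial_deriv (\<lambda>\<theta>'. M \<theta>' $$ (i,j)) k \<theta>"
    using c ij by (simp add: mat_partial_deriv_def)
  also have "\<dots> = F $$ (i,j)" unfolding partial_deriv_def
    by (rule some_deriv_eq) (use mder_entry[OF d ij] in simp)
  finally show "mat_partial_deriv M k \<theta> $$ (i,j) = F $$ (i,j)" .
qed

lemma partial_deriv_eq:
  assumes "((\<lambda>t. f (\<theta>(k:=t))) has_real_derivative D) (at (\<theta> k))"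
  shows "partial_deriv f k \<theta> = D"
  unfolding partial_deriv_def by (rule some_deriv_eq[OF assms])

lemma partial_deriv_has:
  assumes "(\<lambda>t. f (\<theta>(k:=t))) differentiable (at (\<theta> k))"
  shows "((\<lambda>t. f (\<theta>(k:=t))) has_real_derivative partial_deriv f k \<theta>) (at (\<theta> k))"
  unfolding partial_deriv_def by (rule differentiable_imp_some_deriv[OF assms])

context vecchia
begin

lemma B_carrier: "Bmat Z Sig N \<theta>' \<in> carrier_mat n n"
  unfolding Bmat_def dimZ by simp

lemma B_index: "i < n \<Longrightarrow> j < n \<Longrightarrow> Bmat Z Sig N \<theta>' $$ (i,j) =
   (if i = j then 1 else if j \<in> N i then - (Avec Z Sig N i \<theta>' $$ (0, card {a \<in> N i. a < j})) else 0)"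
  unfolding Bmat_def dimZ by simp

lemma B_upper0: "i < j \<Longrightarrow> j < n \<Longrightarrow> Bmat Z Sig N \<theta>' $$ (i,j) = 0"
  using N[of i] by (auto simp: B_index)

lemma B_diag: "i < n \<Longrightarrow> Bmat Z Sig N \<theta>' $$ (i,i) = 1"
  by (simp add: B_index)

lemma B_det: "det (Bmat Z Sig N \<theta>') = 1"
proof -
  have "det (Bmat Z Sig N \<theta>') = prod_list (diag_mat (Bmat Z Sig N \<theta>'))"
    by (rule det_lower_triangular[OF _ B_carrier]) (rule B_upper0)
  also have "diag_mat (Bmat Z Sig N \<theta>') = map (\<lambda>i. 1) [0..<n]"
    unfolding diag_mat_def using B_carrier[of \<theta>'] by (auto simp: B_diag)
  also have "prod_list (map (\<lambda>i. 1::real) [0..<n]) = 1" by (induct n) auto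
  finally show ?thesis .
qed

lemma Binv:
  "inv_mat (Bmat Z Sig N \<theta>') \<in> carrier_mat n n"
  "Bmat Z Sig N \<theta>' * inv_mat (Bmat Z Sig N \<theta>') = 1\<^sub>m n"
  "inv_mat (Bmat Z Sig N \<theta>') * Bmat Z Sig N \<theta>' = 1\<^sub>m n"
  using inv_mat_prop[OF B_carrier, of \<theta>'] B_det[of \<theta>'] by auto

lemma Binv_lower:
  assumes "a < j" "j < n"
  shows "inv_mat (Bmat Z Sig N \<theta>') $$ (a,j) = 0"
  using assms
proof (induction a rule: less_induct)
  case (less a)
  let ?B = "Bmat Z Sig N \<theta>'"
  let ?G = "inv_mat ?B"
  have a: "a < n" using less by simp
  have "(?B * ?G) $$ (a,j) = (\<Sum>b<n. ?B $$ (a,b) * ?G $$ (b,j))"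
    by (rule mult_mat_index_sum[OF B_carrier Binv(1) a less(3)])
  also have "\<dots> = (\<Sum>b<n. (if b = a then 1 else 0) * ?G $$ (a,j))"
  proof (rule sum.cong[OF refl])
    fix b assume b: "b \<in> {..<n}"
    consider "b = a" | "b < a" | "a < b" by linarith
    then show "?B $$ (a,b) * ?G $$ (b,j) = (if b = a then 1 else 0) * ?G $$ (a,j)"
    proof cases
      case 1 then show ?thesis using a by (simp add: B_diag)
    next
      case 2 then have "?G $$ (b,j) = 0" using less by simp
      then show ?thesis using 2 by simp
    next
      case 3 then show ?thesis using b by (simp add: B_upper0)
    qed
  qed
  also have "\<dots> = ?G $$ (a,j)" by (rule sum_delta_left[OF a])
  finally have "?G $$ (a,j) = (?B * ?G) $$ (a,j)" by simp
  also have "\<dots> = 0" using Binv(2) a less by simp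
  finally show ?case .
qed

lemma dB_zero:
  assumes ij: "i \<le> j" "j < n"
  shows "mat_partial_deriv (Bmat Z Sig N) k \<theta> $$ (i,j) = 0"
proof -
  have i: "i < n" using ij by simp
  have e: "(\<lambda>t. Bmat Z Sig N (\<theta>(k:=t)) $$ (i,j)) = (\<lambda>t. if i = j then 1 else 0)"
  proof
    fix t show "Bmat Z Sig N (\<theta>(k:=t)) $$ (i,j) = (if i = j then 1 else 0)"
      using ij by (cases "i = j") (auto simp: B_diag B_upper0)
  qed
  have "mat_partial_deriv (Bmat Z Sig N) k \<theta> $$ (i,j) = partial_deriv (\<lambda>\<theta>'. Bmat Z Sig N \<theta>' $$ (i,j)) k \<theta>"
    using B_carrier[of \<theta>] i ij by (simp add: mat_partial_deriv_def)
  also have "\<dots> = 0" by (rule partial_deriv_eq) (simp add: e)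
  finally show ?thesis .
qed

end



context vecchia
begin

lemma B_mder:
  assumes k: "k < q" and pos: "\<theta> 0 > 0"
  shows "mder (\<lambda>t. Bmat Z Sig N (\<theta>(k:=t))) (mat_partial_deriv (Bmat Z Sig N) k \<theta>) (\<theta> k) n n"
proof -
  have "mdiff (\<lambda>t. Bmat Z Sig N (\<theta>(k:=t))) (\<theta> k) n n" by (rule B_path[OF k]) (use pos in simp)
  from mder_of_mdiff[OF this] obtain F where F: "mder (\<lambda>t. Bmat Z Sig N (\<theta>(k:=t))) F (\<theta> k) n n" by blast
  have "mat_partial_deriv (Bmat Z Sig N) k \<theta> = F" by (rule mat_partial_deriv_eq[OF F B_carrier])
  then show ?thesis using F by simp
qed

lemma D_mder:
  assumes k: "k < q" and pos: "\<theta> 0 > 0"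
  shows "mder (\<lambda>t. Dmat Z Sig N (\<theta>(k:=t))) (mat_diag n (\<lambda>i. partial_deriv (Dval Z Sig N i) k \<theta>)) (\<theta> k) n n"
  unfolding mder_def
proof (intro conjI allI impI)
  show "mat_diag n (\<lambda>i. partial_deriv (Dval Z Sig N i) k \<theta>) \<in> carrier_mat n n" by simp
  show "\<forall>\<^sub>F t in nhds (\<theta> k). Dmat Z Sig N (\<theta>(k:=t)) \<in> carrier_mat n n"
    unfolding Dmat_def dimZ by simp
  fix i j assume ij: "i < n" "j < n"
  show "((\<lambda>t. Dmat Z Sig N (\<theta>(k:=t)) $$ (i,j)) has_real_derivative
          mat_diag n (\<lambda>i. partial_deriv (Dval Z Sig N i) k \<theta>) $$ (i,j)) (at (\<theta> k))"
  proof (cases "i = j")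
    case True
    have "((\<lambda>t. Dval Z Sig N i (\<theta>(k:=t))) has_real_derivative partial_deriv (Dval Z Sig N i) k \<theta>) (at (\<theta> k))"
      by (rule partial_deriv_has, rule Dval_path[OF ij(1) k]) (use pos in simp)
    then show ?thesis using True ij by (simp add: Dmat_def dimZ mat_diag_def)
  next
    case False
    then show ?thesis using ij by (simp add: Dmat_def dimZ mat_diag_def)
  qed
qed

lemma Psi_carrier: "Psi Z Sig N \<theta>' \<in> carrier_mat n n"
  unfolding Psi_def Dmat_def dimZ
  by (intro mult_carrier_mat[of _ n n] Binv(1) mat_diag_dim) (use Binv(1)[of \<theta>'] in simp)

lemma Psi_mder:
  assumes k: "k < q" and pos: "\<theta> 0 > 0"
  defines "Bi \<equiv> inv_mat (Bmat Z Sig N \<theta>)"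
    and "dB \<equiv> mat_partial_deriv (Bmat Z Sig N) k \<theta>"
    and "dD \<equiv> mat_diag n (\<lambda>i. partial_deriv (Dval Z Sig N i) k \<theta>)"
  shows "mat_partial_deriv (Psi Z Sig N) k \<theta> =
     (- (Bi * dB * Bi) * Dmat Z Sig N \<theta> + Bi * dD) * transpose_mat Bi + (Bi * Dmat Z Sig N \<theta>) * transpose_mat (- (Bi * dB * Bi))"
proof -
  have ev: "\<forall>\<^sub>F t in nhds (\<theta> k). det (Bmat Z Sig N (\<theta>(k:=t))) \<noteq> 0" by (simp add: B_det)
  have mBi: "mder (\<lambda>t. inv_mat (Bmat Z Sig N (\<theta>(k:=t)))) (- (Bi * dB * Bi)) (\<theta> k) n n"
    using mder_inv[OF B_mder[where \<theta>=\<theta>, OF k pos] ev] unfolding Bi_def dB_def by simp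
  have mD: "mder (\<lambda>t. Dmat Z Sig N (\<theta>(k:=t))) dD (\<theta> k) n n" unfolding dD_def by (rule D_mder[where \<theta>=\<theta>, OF k pos])
  have m1: "mder (\<lambda>t. inv_mat (Bmat Z Sig N (\<theta>(k:=t))) * Dmat Z Sig N (\<theta>(k:=t)))
       (- (Bi * dB * Bi) * Dmat Z Sig N \<theta> + Bi * dD) (\<theta> k) n n"
    using mder_mult[OF mBi mD] unfolding Bi_def by simp
  have m2: "mder (\<lambda>t. inv_mat (Bmat Z Sig N (\<theta>(k:=t))) * Dmat Z Sig N (\<theta>(k:=t)) * transpose_mat (inv_mat (Bmat Z Sig N (\<theta>(k:=t)))))
       ((- (Bi * dB * Bi) * Dmat Z Sig N \<theta> + Bi * dD) * transpose_mat Bi + (Bi * Dmat Z Sig N \<theta>) * transpose_mat (- (Bi * dB * Bi))) (\<theta> k) n n"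
    using mder_mult[OF m1 mder_transpose[OF mBi]] unfolding Bi_def by simp
  show ?thesis
    by (rule mat_partial_deriv_eq[OF _ Psi_carrier]) (unfold Psi_def, rule m2)
qed

end



lemma trace_mat_sum: "A \<in> carrier_mat n n \<Longrightarrow> trace_mat A = (\<Sum>i<n. A $$ (i,i))"
  unfolding trace_mat_def by auto

lemma trace_cyc:
  assumes X: "X \<in> carrier_mat n p" and Y: "Y \<in> carrier_mat p n"
  shows "trace_mat (X * Y) = trace_mat (Y * X)"
proof -
  have "trace_mat (X * Y) = (\<Sum>i<n. (X * Y) $$ (i,i))" using X Y by (intro trace_mat_sum) simp
  also have "\<dots> = (\<Sum>i<n. \<Sum>a<p. X $$ (i,a) * Y $$ (a,i))"
    by (intro sum.cong refl mult_mat_index_sum[OF X Y]) auto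
  also have "\<dots> = (\<Sum>a<p. \<Sum>i<n. Y $$ (a,i) * X $$ (i,a))"
    by (subst sum.swap) (simp add: mult.commute)
  also have "\<dots> = (\<Sum>a<p. (Y * X) $$ (a,a))"
    by (intro sum.cong refl mult_mat_index_sum[OF Y X, symmetric]) auto
  also have "\<dots> = trace_mat (Y * X)" using X Y by (intro trace_mat_sum[symmetric]) simp
  finally show ?thesis .
qed

lemma mat_diag_cong: "(\<And>i. i < n \<Longrightarrow> f i = g i) \<Longrightarrow> mat_diag n f = mat_diag n g"
  unfolding mat_diag_def by (rule eq_matI) auto

lemma add_uminus_dims: "dim_row A = dim_row B \<Longrightarrow> dim_col A = dim_col B \<Longrightarrow> (A::'a::ab_group_add mat) + - B = A - B"
  by (rule eq_matI) auto

lemma mat_diag_dims[simp]: "dim_row (mat_diag n f) = n" "dim_col (mat_diag n f) = n"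
  unfolding mat_diag_def by auto

locale falg =
  fixes n :: nat and B Bi :: "real mat" and d :: "nat \<Rightarrow> real"
  assumes B: "B \<in> carrier_mat n n" and Bi: "Bi \<in> carrier_mat n n"
    and BBi: "B * Bi = 1\<^sub>m n" and BiB: "Bi * B = 1\<^sub>m n"
    and Bi_low: "\<And>a j. a < j \<Longrightarrow> j < n \<Longrightarrow> Bi $$ (a,j) = 0"
    and d: "\<And>i. i < n \<Longrightarrow> d i \<noteq> 0"
begin

definition "Dm = mat_diag n d"
definition "Di = mat_diag n (\<lambda>i. inverse (d i))"
definition "psid dB e = (- (Bi * dB * Bi) * Dm + Bi * mat_diag n e) * transpose_mat Bi + (Bi * Dm) * transpose_mat (- (Bi * dB * Bi))"

lemma dims[simp]: "dim_row B = n" "dim_col B = n" "dim_row Bi = n" "dim_col Bi = n"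
  "dim_row Dm = n" "dim_col Dm = n" "dim_row Di = n" "dim_col Di = n"
  using B Bi by (auto simp: Dm_def Di_def mat_diag_def)

lemma DDi: "Dm * Di = 1\<^sub>m n" "Di * Dm = 1\<^sub>m n"
proof -
  have "Dm * Di = mat_diag n (\<lambda>i. d i * inverse (d i))" unfolding Dm_def Di_def by simp
  also have "\<dots> = mat_diag n (\<lambda>i. 1)" by (rule mat_diag_cong) (simp add: d)
  finally show "Dm * Di = 1\<^sub>m n" by simp
  have "Di * Dm = mat_diag n (\<lambda>i. inverse (d i) * d i)" unfolding Dm_def Di_def by simp
  also have "\<dots> = mat_diag n (\<lambda>i. 1)" by (rule mat_diag_cong) (simp add: d)
  finally show "Di * Dm = 1\<^sub>m n" by simp
qed

lemma BT: "transpose_mat Bi * transpose_mat B = 1\<^sub>m n" "transpose_mat B * transpose_mat Bi = 1\<^sub>m n"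
proof -
  have "transpose_mat Bi * transpose_mat B = transpose_mat (B * Bi)" by (simp add: transpose_mult_dims)
  then show "transpose_mat Bi * transpose_mat B = 1\<^sub>m n" using BBi by simp
  have "transpose_mat B * transpose_mat Bi = transpose_mat (Bi * B)" by (simp add: transpose_mult_dims)
  then show "transpose_mat B * transpose_mat Bi = 1\<^sub>m n" using BiB by simp
qed

lemma canc:
  "dim_row X = n \<Longrightarrow> B * (Bi * X) = X"
  "dim_row X = n \<Longrightarrow> Bi * (B * X) = X"
  "dim_row X = n \<Longrightarrow> Dm * (Di * X) = X"
  "dim_row X = n \<Longrightarrow> Di * (Dm * X) = X"
  "dim_row X = n \<Longrightarrow> transpose_mat Bi * (transpose_mat B * X) = X"
  "dim_row X = n \<Longrightarrow> transpose_mat B * (transpose_mat Bi * X) = X"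
  by (simp_all add: assoc_dims[symmetric] BBi BiB DDi BT)

lemmas asimps = assoc_dims transpose_mult_dims add_mult_dims mult_add_dims minus_mult_dims mult_minus_dims
   canc BBi BiB DDi BT transpose_uminus

lemma inv_D: "inv_mat Dm = Di"
  by (rule inv_mat_eq[OF _ _ DDi(1) DDi(2)]) (auto intro: carrier_matI)

lemma inv_Psi: "inv_mat (Bi * Dm * transpose_mat Bi) = transpose_mat B * Di * B"
  by (rule inv_mat_eq[of _ n]) (auto simp: asimps intro!: carrier_matI)


definition "Mf dB e = - (Di * (dB * (Bi * Dm))) + Di * mat_diag n e - transpose_mat (dB * Bi)"

lemma M_eq:
  assumes dB: "dB \<in> carrier_mat n n"
  shows "Di * (B * (psid dB e * transpose_mat B)) = Mf dB e"
  using dB unfolding psid_def Mf_def by (simp add: asimps add_uminus_dims)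

lemma trace_eq:
  assumes Pk: "Pk \<in> carrier_mat n n" and Pl: "Pl \<in> carrier_mat n n"
  shows "trace_mat (transpose_mat B * Di * B * Pk * (transpose_mat B * Di * B) * Pl) =
         trace_mat ((Di * (B * (Pk * transpose_mat B))) * (Di * (B * (Pl * transpose_mat B))))"
proof -
  let ?Y = "(Di * (B * (Pk * transpose_mat B))) * (Di * (B * (Pl * transpose_mat B))) * transpose_mat Bi"
  have Y: "?Y \<in> carrier_mat n n" using Pk Pl by (intro carrier_matI) auto
  have "transpose_mat B * Di * B * Pk * (transpose_mat B * Di * B) * Pl = transpose_mat B * ?Y"
    using Pk Pl by (simp add: asimps)
  then have "trace_mat (transpose_mat B * Di * B * Pk * (transpose_mat B * Di * B) * Pl) = trace_mat (?Y * transpose_mat B)"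
    using trace_cyc[OF _ Y, of "transpose_mat B"] B by simp
  also have "?Y * transpose_mat B = (Di * (B * (Pk * transpose_mat B))) * (Di * (B * (Pl * transpose_mat B)))"
    using Pk Pl by (simp add: asimps)
  finally show ?thesis .
qed

end



context falg
begin

lemma Di_left: "X \<in> carrier_mat n n \<Longrightarrow> i < n \<Longrightarrow> j < n \<Longrightarrow> (Di * X) $$ (i,j) = inverse (d i) * X $$ (i,j)"
  unfolding Di_def by (simp add: mat_diag_mult_left)

lemma Dm_right: "X \<in> carrier_mat n n \<Longrightarrow> i < n \<Longrightarrow> j < n \<Longrightarrow> (X * Dm) $$ (i,j) = X $$ (i,j) * d j"
  unfolding Dm_def by (simp add: mat_diag_mult_right)

lemma Di_diag: "i < n \<Longrightarrow> j < n \<Longrightarrow> (Di * mat_diag n e) $$ (i,j) = (if i = j then inverse (d i) * e i else 0)"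
  unfolding Di_def mat_diag_diag by (simp add: mat_diag_def)

lemma P_zero:
  assumes dB: "dB \<in> carrier_mat n n" and dB0: "\<And>i j. i \<le> j \<Longrightarrow> j < n \<Longrightarrow> dB $$ (i,j) = 0"
    and ij: "i \<le> j" "j < n"
  shows "(dB * Bi) $$ (i,j) = 0"
proof -
  have "(dB * Bi) $$ (i,j) = (\<Sum>a<n. dB $$ (i,a) * Bi $$ (a,j))"
    by (rule mult_mat_index_sum[OF dB Bi]) (use ij in auto)
  also have "\<dots> = 0"
  proof (rule sum.neutral, rule ballI)
    fix a assume a: "a \<in> {..<n}"
    show "dB $$ (i,a) * Bi $$ (a,j) = 0"
    proof (cases "i \<le> a")
      case True then show ?thesis using dB0 a by simp
    next
      case False then show ?thesis using Bi_low[of a j] ij by simp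
    qed
  qed
  finally show ?thesis .
qed

lemma Mf_index:
  assumes dB: "dB \<in> carrier_mat n n" and ij: "i < n" "j < n"
  shows "Mf dB e $$ (i,j) = - (inverse (d i) * ((dB * Bi) $$ (i,j) * d j)) + (if i = j then inverse (d i) * e i else 0) - (dB * Bi) $$ (j,i)"
proof -
  have P: "dB * Bi \<in> carrier_mat n n" using dB by (intro carrier_matI) auto
  have e1: "dB * (Bi * Dm) = (dB * Bi) * Dm" using dB by (simp add: assoc_dims)
  have PD: "(dB * Bi) * Dm \<in> carrier_mat n n" using P by (intro carrier_matI) auto
  have "(Di * (dB * (Bi * Dm))) $$ (i,j) = inverse (d i) * (((dB * Bi) * Dm) $$ (i,j))"
    unfolding e1 by (rule Di_left[OF PD ij])
  also have "((dB * Bi) * Dm) $$ (i,j) = (dB * Bi) $$ (i,j) * d j" by (rule Dm_right[OF P ij])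
  finally have "(Di * (dB * (Bi * Dm))) $$ (i,j) = inverse (d i) * ((dB * Bi) $$ (i,j) * d j)" .
  moreover have "(Di * mat_diag n e) $$ (i,j) = (if i = j then inverse (d i) * e i else 0)" by (rule Di_diag[OF ij])
  ultimately show ?thesis unfolding Mf_def using dB ij by simp
qed

lemma Mf_carrier: "dB \<in> carrier_mat n n \<Longrightarrow> Mf dB e \<in> carrier_mat n n"
  unfolding Mf_def by (intro carrier_matI) auto

lemma trace_Mf:
  assumes dBk: "dBk \<in> carrier_mat n n" and dBk0: "\<And>i j. i \<le> j \<Longrightarrow> j < n \<Longrightarrow> dBk $$ (i,j) = 0"
    and dBl: "dBl \<in> carrier_mat n n" and dBl0: "\<And>i j. i \<le> j \<Longrightarrow> j < n \<Longrightarrow> dBl $$ (i,j) = 0"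
  shows "trace_mat (Mf dBk ek * Mf dBl el) =
     2 * (\<Sum>i<n. \<Sum>j<n. (inverse (d i) * (dBk * Bi) $$ (i,j)) * ((dBl * Bi) $$ (i,j) * d j))
     + (\<Sum>i<n. inverse ((d i)^2) * ek i * el i)"
proof -
  let ?p = "\<lambda>i j. (dBk * Bi) $$ (i,j)"
  let ?r = "\<lambda>i j. (dBl * Bi) $$ (i,j)"
  let ?F = "\<lambda>i j. (inverse (d i) * ?p i j) * (?r i j * d j)"
  let ?G = "\<lambda>i. inverse ((d i)^2) * ek i * el i"
  have Mk: "Mf dBk ek \<in> carrier_mat n n" by (rule Mf_carrier[OF dBk])
  have Ml: "Mf dBl el \<in> carrier_mat n n" by (rule Mf_carrier[OF dBl])
  have "trace_mat (Mf dBk ek * Mf dBl el) = (\<Sum>i<n. (Mf dBk ek * Mf dBl el) $$ (i,i))"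
    using Mk Ml by (intro trace_mat_sum) simp
  also have "\<dots> = (\<Sum>i<n. \<Sum>j<n. Mf dBk ek $$ (i,j) * Mf dBl el $$ (j,i))"
    by (intro sum.cong refl mult_mat_index_sum[OF Mk Ml]) auto
  also have "\<dots> = (\<Sum>i<n. \<Sum>j<n. ?F i j + ?F j i + (if j = i then ?G i else 0))"
  proof (intro sum.cong refl)
    fix i j assume i: "i \<in> {..<n}" and j: "j \<in> {..<n}"
    then have ij: "i < n" "j < n" by auto
    have pz: "\<And>a b. a \<le> b \<Longrightarrow> b < n \<Longrightarrow> ?p a b = 0" by (rule P_zero[OF dBk dBk0])
    have rz: "\<And>a b. a \<le> b \<Longrightarrow> b < n \<Longrightarrow> ?r a b = 0" by (rule P_zero[OF dBl dBl0])
    have dj: "d j \<noteq> 0" "d i \<noteq> 0" using d ij by auto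
    consider "i < j" | "i = j" | "j < i" by linarith
    then show "Mf dBk ek $$ (i,j) * Mf dBl el $$ (j,i) = ?F i j + ?F j i + (if j = i then ?G i else 0)"
    proof cases
      case 1
      then show ?thesis using ij pz[of i j] rz[of i j] by (simp add: Mf_index[OF dBk] Mf_index[OF dBl] field_simps)
    next
      case 2
      then show ?thesis using ij pz[of i i] rz[of i i] dj
        by (simp add: Mf_index[OF dBk] Mf_index[OF dBl] field_simps power2_eq_square)
    next
      case 3
      then show ?thesis using ij pz[of j i] rz[of j i] by (simp add: Mf_index[OF dBk] Mf_index[OF dBl] field_simps)
    qed
  qed
  also have "\<dots> = (\<Sum>i<n. \<Sum>j<n. ?F i j) + (\<Sum>i<n. \<Sum>j<n. ?F j i) + (\<Sum>i<n. \<Sum>j<n. (if j = i then ?G i else 0))"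
    by (simp add: sum.distrib)
  also have "(\<Sum>i<n. \<Sum>j<n. ?F j i) = (\<Sum>i<n. \<Sum>j<n. ?F i j)" by (rule sum.swap)
  also have "(\<Sum>i<n. \<Sum>j<n. (if j = i then ?G i else 0)) = (\<Sum>i<n. ?G i)"
    by (intro sum.cong refl) simp
  finally show ?thesis by simp
qed

lemma psid_carrier: "dB \<in> carrier_mat n n \<Longrightarrow> psid dB e \<in> carrier_mat n n"
  unfolding psid_def by (intro carrier_matI) auto

lemma falg_main:
  assumes dBk: "dBk \<in> carrier_mat n n" and dBk0: "\<And>i j. i \<le> j \<Longrightarrow> j < n \<Longrightarrow> dBk $$ (i,j) = 0"
    and dBl: "dBl \<in> carrier_mat n n" and dBl0: "\<And>i j. i \<le> j \<Longrightarrow> j < n \<Longrightarrow> dBl $$ (i,j) = 0"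
  shows "1/2 * trace_mat (inv_mat (Bi * Dm * transpose_mat Bi) * psid dBk ek * inv_mat (Bi * Dm * transpose_mat Bi) * psid dBl el)
    = (\<Sum>i<n. \<Sum>j<n. (inv_mat Dm * dBk * Bi) $$ (i,j) * (dBl * Bi * Dm) $$ (i,j))
      + 1/2 * (\<Sum>i<n. inverse ((d i)^2) * ek i * el i)"
proof -
  have "trace_mat (inv_mat (Bi * Dm * transpose_mat Bi) * psid dBk ek * inv_mat (Bi * Dm * transpose_mat Bi) * psid dBl el)
      = trace_mat (Mf dBk ek * Mf dBl el)"
    unfolding inv_Psi trace_eq[OF psid_carrier[OF dBk] psid_carrier[OF dBl]] M_eq[OF dBk] M_eq[OF dBl] ..
  also have "\<dots> = 2 * (\<Sum>i<n. \<Sum>j<n. (inverse (d i) * (dBk * Bi) $$ (i,j)) * ((dBl * Bi) $$ (i,j) * d j))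
     + (\<Sum>i<n. inverse ((d i)^2) * ek i * el i)" by (rule trace_Mf[OF dBk dBk0 dBl dBl0])
  also have "(\<Sum>i<n. \<Sum>j<n. (inverse (d i) * (dBk * Bi) $$ (i,j)) * ((dBl * Bi) $$ (i,j) * d j))
      = (\<Sum>i<n. \<Sum>j<n. (inv_mat Dm * dBk * Bi) $$ (i,j) * (dBl * Bi * Dm) $$ (i,j))"
  proof (intro sum.cong refl)
    fix i j assume "i \<in> {..<n}" "j \<in> {..<n}"
    then have ij: "i < n" "j < n" by auto
    have Pk: "dBk * Bi \<in> carrier_mat n n" "dBl * Bi \<in> carrier_mat n n" using dBk dBl by (auto intro: carrier_matI)
    have "inv_mat Dm * dBk * Bi = Di * (dBk * Bi)" unfolding inv_D using dBk by (simp add: assoc_dims)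
    then have "(inv_mat Dm * dBk * Bi) $$ (i,j) = inverse (d i) * (dBk * Bi) $$ (i,j)"
      using Di_left[OF Pk(1) ij] by simp
    moreover have "(dBl * Bi * Dm) $$ (i,j) = (dBl * Bi) $$ (i,j) * d j" by (rule Dm_right[OF Pk(2) ij])
    ultimately show "(inverse (d i) * (dBk * Bi) $$ (i,j)) * ((dBl * Bi) $$ (i,j) * d j)
      = (inv_mat Dm * dBk * Bi) $$ (i,j) * (dBl * Bi * Dm) $$ (i,j)" by simp
  qed
  finally show ?thesis by simp
qed

end




theorem proposition2:
  fixes n m q :: nat and Z :: "real mat" and Sig :: "(nat \<Rightarrow> real) \<Rightarrow> real mat"
    and N :: "nat \<Rightarrow> nat set" and \<theta> :: "nat \<Rightarrow> real" and k l :: nat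
  assumes Z: "Z \<in> carrier_mat n m"
    and q: "q \<ge> 1"
    and sigma_pos: "\<theta> 0 > 0"
    and Sig_dep: "\<And>\<theta>1 \<theta>2. (\<forall>j\<in>{1..<q}. \<theta>1 j = \<theta>2 j) \<Longrightarrow> Sig \<theta>1 = Sig \<theta>2"
    and Sig_cov: "\<And>\<theta>'. covariance_mat m (Sig \<theta>')"
    and Sig_diff: "\<And>\<theta>' j a b. j \<in> {1..<q} \<Longrightarrow> a < m \<Longrightarrow> b < m \<Longrightarrow>
                      has_partial_deriv_at (\<lambda>\<theta>''. Sig \<theta>'' $$ (a,b)) j \<theta>'"
    and N: "\<And>i. i < n \<Longrightarrow> N i \<subseteq> {..<i}"
    and kl: "k < q" "l < q"
  shows "fisher_info Z Sig N \<theta> k l =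
      (\<Sum>i<n. \<Sum>j<n.
         (inv_mat (Dmat Z Sig N \<theta>) * mat_partial_deriv (Bmat Z Sig N) k \<theta> * inv_mat (Bmat Z Sig N \<theta>)) $$ (i,j) *
         (mat_partial_deriv (Bmat Z Sig N) l \<theta> * inv_mat (Bmat Z Sig N \<theta>) * Dmat Z Sig N \<theta>) $$ (i,j))
      + 1/2 * (\<Sum>i<n. inverse ((Dval Z Sig N i \<theta>)\<^sup>2) *
               partial_deriv (Dval Z Sig N i) k \<theta> * partial_deriv (Dval Z Sig N i) l \<theta>)"
proof -
  interpret V: vecchia n m q Z Sig N
    by unfold_locales (fact Z, fact Sig_dep, fact Sig_cov, fact Sig_diff, fact N)
  let ?B = "Bmat Z Sig N \<theta>"
  let ?Bi = "inv_mat ?B"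
  let ?d = "\<lambda>i. Dval Z Sig N i \<theta>"
  interpret F: falg n ?B ?Bi ?d
  proof unfold_locales
    show "?B \<in> carrier_mat n n" by (rule V.B_carrier)
    show "?Bi \<in> carrier_mat n n" "?B * ?Bi = 1\<^sub>m n" "?Bi * ?B = 1\<^sub>m n" by (rule V.Binv)+
    show "\<And>a j. a < j \<Longrightarrow> j < n \<Longrightarrow> ?Bi $$ (a,j) = 0" by (rule V.Binv_lower)
    show "\<And>i. i < n \<Longrightarrow> ?d i \<noteq> 0" using V.Dval_pos sigma_pos by (metis less_irrefl)
  qed
  have Dm: "Dmat Z Sig N \<theta> = F.Dm" unfolding Dmat_def F.Dm_def V.dimZ ..
  have Psi: "Psi Z Sig N \<theta> = ?Bi * F.Dm * transpose_mat ?Bi" unfolding Psi_def Dm ..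
  have dPsi: "\<And>k. k < q \<Longrightarrow> mat_partial_deriv (Psi Z Sig N) k \<theta> =
      F.psid (mat_partial_deriv (Bmat Z Sig N) k \<theta>) (\<lambda>i. partial_deriv (Dval Z Sig N i) k \<theta>)"
  proof -
    fix k assume k: "k < q"
    show "mat_partial_deriv (Psi Z Sig N) k \<theta> =
      F.psid (mat_partial_deriv (Bmat Z Sig N) k \<theta>) (\<lambda>i. partial_deriv (Dval Z Sig N i) k \<theta>)"
      unfolding F.psid_def using V.Psi_mder[where \<theta>=\<theta>, OF k sigma_pos] unfolding Dm by simp
  qed
  have dBc: "\<And>k. mat_partial_deriv (Bmat Z Sig N) k \<theta> \<in> carrier_mat n n"
    unfolding mat_partial_deriv_def using V.B_carrier[of \<theta>] by auto
  have dB0: "\<And>k i j. i \<le> j \<Longrightarrow> j < n \<Longrightarrow> mat_partial_deriv (Bmat Z Sig N) k \<theta> $$ (i,j) = 0"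
    by (rule V.dB_zero)
  show ?thesis
    unfolding fisher_info_def Psi dPsi[OF kl(1)] dPsi[OF kl(2)] Dm
    by (rule F.falg_main[OF dBc dB0 dBc dB0])
qed


end
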